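(* Assume the model and the bounded-SNR assumption in the context, and fix $\varepsilon>0$. For a profile $\mathbf a$ and a player $n$ with $a_n\notin B_\varepsilon(\mathbf a_{-n})$, let $k$ be uniformly distributed on $B_{\varepsilon/2}(\mathbf a_{-n})$ and $\mathbf a'=(k,\mathbf a_{-n})$. Then the probability (over the random locations) that for every profile $\mathbf a$ and every player $n$ with $a_n\notin B_\varepsilon(\mathbf a_{-n})$ $$\mathbb E_k\big[X(\mathbf a')-X(\mathbf a)\big]\ge\frac{\varepsilon}{4}$$ tends to $1$ as $N\to\infty$. Consequently, with probability tending to $1$, for every non-degenerate schedule the $\varepsilon$-approximate best-response dynamics satisfy $\mathbb E[X(\mathbf a_{t+1})-X(\mathbf a_t)\mid\mathbf a_t]\ge0$ for all $t\ge0$.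
   Context: Model. Fix constants $\lambda>0$, $\alpha>0$, $G>0$, $\theta_T,\theta_R\in(0,2\pi]$, $P_0>0$, $N_0>0$ and a positive integer $S$. For each $N\ge2$ there are $N$ players $\mathcal N=\{1,\dots,N\}$ and a destination map $d:\mathcal N\to\mathcal N$, fixed independently of the player locations, with $d(n)\ne n$ for all $n$ and with every player being the destination of at most $S$ players. The number of channels is $K=N/l_N$ (an integer), where $l_N\ge1$ and $l_N\left(\frac{\log N}{N}\right)^{\frac{\alpha}{\alpha+2}}\to0$ as $N\to\infty$. The locations $x_1,\dots,x_N$ of the players are i.i.d. uniform on a fixed closed set $\mathcal D\subseteq\mathbb R^2$ of area $1/\lambda$. Each player has a transmit beam of angular width $\theta_T$ and a receive beam of angular width $\theta_R$, with fixed arbitrary orientations. For $i\ne j$, $r_{i,j}=\|x_i-x_j\|$; $\theta_{i,j}$ denotes the angle between the direction from $x_i$ to $x_j$ and the bisector of player $i$'s transmit beam when $i$ acts as transmitter, resp. of player $i$'s receive beam when $i$ acts as receiver. The channel gain from transmitter $m$ to receiver $d(n)$ is $g_{m,d(n)}=G\,r_{m,d(n)}^{-\alpha}\,\mathbf 1\{|\theta_{m,d(n)}|\le\theta_T/2\}\,\mathbf 1\{|\theta_{d(n),m}|\le\theta_R/2\}$ for $m\ne d(n)$ (angle of $m$ w.r.t. its transmit beam, angle of $d(n)$ w.r.t. its receive beam), and $g_{d(n),d(n)}=+\infty$. Player $n$ transmits with power $P_n\in(0,P_{\max}]$, $P_{\max}=P_0\left(\frac{\log N}{N}\right)^{\alpha/2}$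 (the $P_n$ may depend on the locations). Game: each player chooses one channel $a_n\in\{1,\dots,K\}$; $\mathbf a=(a_1,\dots,a_N)$, $\mathbf a_{-n}$ is the profile of the others and $(k,\mathbf a_{-n})$ the profile where $n$ plays $k$. Interference: $I_n(\mathbf a)=\sum_{m\ne n:\,a_m=a_n}g_{m,d(n)}P_m$. Utility: $u_n(\mathbf a)=R_n(\mathbf a)=\log_2\!\big(1+\frac{g_{n,d(n)}P_n}{N_0+I_n(\mathbf a)}\big)$ (equal to $0$ if $I_n(\mathbf a)=\infty$). Sum-rate: $X(\mathbf a)=\sum_{n\in\mathcal N}R_n(\mathbf a)$. For $\varepsilon>0$, $B_\varepsilon(\mathbf a_{-n})=\{k:\ u_n(k,\mathbf a_{-n})+\varepsilon\ge\max_{k'}u_n(k',\mathbf a_{-n})\}$. A profile $\mathbf a$ is an $\varepsilon$-PNE if $a_n\in B_\varepsilon(\mathbf a_{-n})$ for all $n$. All probabilities "over the random game" are with respect to the random locations, and limits are as $N\to\infty$ with all constants fixed. Bounded-SNR assumption: there is a constant $\sigma_{\max}$ (independent of $N$) such that $\sigma_n:=g_{n,d(n)}P_n/N_0\le\sigma_{\max}$ for all $n$. Dynamics ($\varepsilon$-approximate best-response dynamics). Start from an arbitrary profile $\mathbf a_0$. At each step $t$ a set $\mathcal N_t\subseteq\mathcal N$, determined by $t$ and $\mathbf a_t$ (the schedule), is given and an acting player $n$ is drawn uniformly from $\mathcal N_t$. If $a_{n,t}\in B_\varepsilon(\mathbf a_{-n,t})$ then $\mathbf a_{t+1}=\mathbf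 a_t$; otherwise $\mathbf a_{t+1}=(k,\mathbf a_{-n,t})$ with $k$ uniform on $B_{\varepsilon/2}(\mathbf a_{-n,t})$; all random choices are independent given the past. (If $\mathcal N_t=\emptyset$, then $\mathbf a_{t+1}=\mathbf a_t$.) The schedule is non-degenerate if for every $t$ either $\mathcal N_t$ contains some $n$ with $a_{n,t}\notin B_\varepsilon(\mathbf a_{-n,t})$, or $\mathbf a_t$ is an $\varepsilon$-PNE. *)

theory Defs
  imports "HOL-Probability.Probability"
begin

definition vec_angle :: "real \<times> real \<Rightarrow> real \<times> real \<Rightarrow> real" where
  "vec_angle u v = arccos (inner u v / (norm u * norm v))"

text \<open>Beam test: the direction from p to q lies within the beam of angular
 width th whose bisector has direction angle phi (i.e. |theta| <= th/2).\<close>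
definition in_beam :: "real \<Rightarrow> real \<Rightarrow> real \<times> real \<Rightarrow> real \<times> real \<Rightarrow> bool" where
  "in_beam th phi p q \<longleftrightarrow> vec_angle (q - p) (cos phi, sin phi) \<le> th / 2"

text \<open>A realized game: players 0..<nP, channels 1..nK.\<close>
record net =
  nP :: nat
  nK :: nat
  dst :: "nat \<Rightarrow> nat"
  pos :: "nat \<Rightarrow> real \<times> real"
  pw :: "nat \<Rightarrow> real"
  phiT :: "nat \<Rightarrow> real"
  phiR :: "nat \<Rightarrow> real"
  gG :: real
  alph :: real
  thT :: real
  thR :: real
  noise :: real

text \<open>Channel gain from transmitter m to receiver j (for m \<noteq> j and distinct positions).\<close>
definition gain :: "net \<Rightarrow> nat \<Rightarrow> nat \<Rightarrow> real" where
  "gain g m j = gG g * dist (pos g m) (pos g j) powr (- alph g)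
     * (if in_beam (thT g) (phiT g m) (pos g m) (pos g j)
           \<and> in_beam (thR g) (phiR g j) (pos g j) (pos g m) then 1 else 0)"

definition interf :: "net \<Rightarrow> (nat \<Rightarrow> nat) \<Rightarrow> nat \<Rightarrow> real" where
  "interf g a n = (\<Sum>m \<in> {m. m < nP g \<and> m \<noteq> n \<and> a m = a n}. gain g m (dst g n) * pw g m)"

text \<open>Rate; it is 0 when the destination itself transmits on the same channel
 (infinite interference, since g_{d(n),d(n)} = +infinity).\<close>
definition rate :: "net \<Rightarrow> (nat \<Rightarrow> nat) \<Rightarrow> nat \<Rightarrow> real" where
  "rate g a n = (if (\<exists>m < nP g. m \<noteq> n \<and> a m = a n \<and> m = dst g n) then 0
     else log 2 (1 + gain g n (dst g n) * pw g n / (noise g + interf g a n)))"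

definition sumrate :: "net \<Rightarrow> (nat \<Rightarrow> nat) \<Rightarrow> real" where
  "sumrate g a = (\<Sum>n < nP g. rate g a n)"

definition profile :: "net \<Rightarrow> (nat \<Rightarrow> nat) \<Rightarrow> bool" where
  "profile g a \<longleftrightarrow> (\<forall>n < nP g. a n \<in> {1..nK g})"

definition best_set :: "net \<Rightarrow> real \<Rightarrow> (nat \<Rightarrow> nat) \<Rightarrow> nat \<Rightarrow> nat set" where
  "best_set g eps a n = {k \<in> {1..nK g}.
      rate g (a(n := k)) n + eps \<ge> (MAX k' \<in> {1..nK g}. rate g (a(n := k')) n)}"

definition eps_PNE :: "net \<Rightarrow> real \<Rightarrow> (nat \<Rightarrow> nat) \<Rightarrow> bool" where
  "eps_PNE g eps a \<longleftrightarrow> (\<forall>n < nP g. a n \<in> best_set g eps a n)"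

text \<open>Schedules: sched t a is the set N_t, a function of t and a_t.\<close>
definition valid_schedule :: "net \<Rightarrow> (nat \<Rightarrow> (nat \<Rightarrow> nat) \<Rightarrow> nat set) \<Rightarrow> bool" where
  "valid_schedule g sched \<longleftrightarrow> (\<forall>t a. sched t a \<subseteq> {..<nP g})"

definition nondegenerate :: "net \<Rightarrow> real \<Rightarrow> (nat \<Rightarrow> (nat \<Rightarrow> nat) \<Rightarrow> nat set) \<Rightarrow> bool" where
  "nondegenerate g eps sched \<longleftrightarrow> (\<forall>t a. profile g a \<longrightarrow>
      (\<exists>n \<in> sched t a. a n \<notin> best_set g eps a n) \<or> eps_PNE g eps a)"

text \<open>One step of eps-approximate best-response dynamics: the distribution of
 a_{t+1} given t and a_t = a (Markov transition kernel).\<close>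
definition br_step :: "net \<Rightarrow> real \<Rightarrow> (nat \<Rightarrow> (nat \<Rightarrow> nat) \<Rightarrow> nat set) \<Rightarrow> nat
    \<Rightarrow> (nat \<Rightarrow> nat) \<Rightarrow> (nat \<Rightarrow> nat) pmf" where
  "br_step g eps sched t a =
     (if sched t a = {} then return_pmf a
      else pmf_of_set (sched t a) \<bind> (\<lambda>n.
        if a n \<in> best_set g eps a n then return_pmf a
        else pmf_of_set (best_set g (eps / 2) a n) \<bind> (\<lambda>k. return_pmf (a(n := k)))))"

definition mk_net :: "real \<Rightarrow> real \<Rightarrow> real \<Rightarrow> real \<Rightarrow> real \<Rightarrow> nat \<Rightarrow> nat \<Rightarrow> (nat \<Rightarrow> nat)
   \<Rightarrow> (nat \<Rightarrow> real) \<Rightarrow> (nat \<Rightarrow> real) \<Rightarrow> (nat \<Rightarrow> real \<times> real) \<Rightarrow> (nat \<Rightarrow> real) \<Rightarrow> net" where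
  "mk_net G alpha tT tR N0 N K d pT pR x P =
     \<lparr> nP = N, nK = K, dst = d, pos = x, pw = P, phiT = pT, phiR = pR,
       gG = G, alph = alpha, thT = tT, thR = tR, noise = N0 \<rparr>"

end

theory Submission
  imports Defs
begin


lemma log_diff_bound:
  fixes A s D :: real
  assumes "A > 0" "s \<ge> 0" "D \<ge> 0"
  shows "log 2 (1 + s / A) - log 2 (1 + s / (A + D)) \<le> D / (A * ln 2)"
proof -
  have p1: "1 + s / A > 0" and p2: "1 + s/(A+D) > 0" using assms by (auto intro: add_pos_nonneg)
  have L: "log 2 (1 + s / A) - log 2 (1 + s / (A + D)) = ln ((1 + s/A) / (1 + s/(A+D))) / ln 2"
    using p1 p2 by (simp add: log_def ln_div diff_divide_distrib)
  have eq: "(1 + s/A) / (1 + s/(A+D)) = ((A+s)*(A+D)) / (A*(A+D+s))"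
    using assms by (simp add: field_simps)
  have pos: "A*(A+D+s) > 0" using assms by simp
  have q: "((A+s)*(A+D)) / (A*(A+D+s)) > 0" using assms pos by simp
  have "ln (((A+s)*(A+D)) / (A*(A+D+s))) \<le> ((A+s)*(A+D)) / (A*(A+D+s)) - 1"
    using q by (rule ln_le_minus_one)
  also have "((A+s)*(A+D)) / (A*(A+D+s)) - 1 = D * s / (A*(A+D+s))"
    using pos by (simp add: field_simps)
  also have "\<dots> = (D/A) * (s/(A+D+s))" by simp
  also have "\<dots> \<le> (D/A) * 1"
    using assms by (intro mult_left_mono) auto
  finally have "ln ((1 + s/A) / (1 + s/(A+D))) \<le> D / A" using eq by simp
  then have "ln ((1 + s/A) / (1 + s/(A+D))) / ln 2 \<le> (D / A) / ln 2"
    by (intro divide_right_mono) auto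
  then show ?thesis using L by simp
qed

lemma card_fiber_sum:
  assumes "finite A" "finite F"
  shows "(\<Sum>k\<in>F. card {m\<in>A. h m = k}) = card {m\<in>A. h m \<in> F}"
proof -
  have "{m\<in>A. h m \<in> F} = (\<Union>k\<in>F. {m\<in>A. h m = k})" by auto
  moreover have "card (\<Union>k\<in>F. {m\<in>A. h m = k}) = (\<Sum>k\<in>F. card {m\<in>A. h m = k})"
    using assms by (intro card_UN_disjoint) auto
  ultimately show ?thesis by simp
qed

lemma card_gt_sum_bound:
  fixes f :: "'a \<Rightarrow> real"
  assumes "finite F" "\<And>k. k \<in> F \<Longrightarrow> f k \<ge> 0" "tau > 0"
  shows "real (card {k\<in>F. tau < f k}) * tau \<le> (\<Sum>k\<in>F. f k)"
proof -
  have "real (card {k\<in>F. tau < f k}) * tau = (\<Sum>k\<in>{k\<in>F. tau < f k}. tau)" by simp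
  also have "\<dots> \<le> (\<Sum>k\<in>{k\<in>F. tau < f k}. f k)" by (intro sum_mono) auto
  also have "\<dots> \<le> (\<Sum>k\<in>F. f k)" using assms by (intro sum_mono2) auto
  finally show ?thesis .
qed

locale gm =
  fixes g :: net
  assumes noise_pos: "noise g > 0"
    and dst_ok: "\<And>m. m < nP g \<Longrightarrow> dst g m < nP g \<and> dst g m \<noteq> m"
    and pw_pos: "\<And>m. m < nP g \<Longrightarrow> pw g m > 0"
    and gain_nn: "\<And>m j. gain g m j \<ge> 0"
begin

lemma interf_nn: "interf g a m \<ge> 0"
  unfolding interf_def
proof (rule sum_nonneg)
  fix x assume "x \<in> {m'. m' < nP g \<and> m' \<noteq> m \<and> a m' = a m}"
  then have "pw g x > 0" using pw_pos by auto
  then show "0 \<le> gain g x (dst g (m)) * pw g x" using gain_nn by simp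
qed

lemma rate_form:
  assumes "m < nP g"
  shows "rate g a m = (if a (dst g m) = a m then 0
     else log 2 (1 + gain g m (dst g m) * pw g m / (noise g + interf g a m)))"
  using dst_ok[OF assms] unfolding rate_def by auto

lemma rate_nn:
  assumes "m < nP g" shows "rate g a m \<ge> 0"
proof -
  have "gain g m (dst g m) * pw g m / (noise g + interf g a m) \<ge> 0"
    using gain_nn pw_pos[OF assms] noise_pos interf_nn[of a m]
    by (intro divide_nonneg_pos mult_nonneg_nonneg) auto
  then show ?thesis unfolding rate_form[OF assms] by auto
qed

lemma rate_le:
  assumes "m < nP g"
  shows "rate g a m \<le> log 2 (1 + gain g m (dst g m) * pw g m / noise g)"
proof -
  let ?s = "gain g m (dst g m) * pw g m"
  have s: "?s \<ge> 0" using gain_nn pw_pos[OF assms] by (simp add: less_imp_le)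
  have i: "interf g a m \<ge> 0" by (rule interf_nn)
  have "?s / (noise g + interf g a m) \<le> ?s / noise g"
    using s i noise_pos by (intro divide_left_mono) auto
  moreover have "?s / (noise g + interf g a m) \<ge> 0" using s i noise_pos by auto
  ultimately have "log 2 (1 + ?s / (noise g + interf g a m)) \<le> log 2 (1 + ?s / noise g)"
  proof -
    assume h1: "?s / (noise g + interf g a m) \<le> ?s / noise g"
      and h2: "?s / (noise g + interf g a m) \<ge> 0"
    have p1: "0 < 1 + ?s / (noise g + interf g a m)" using h2 by linarith
    have p2: "0 < 1 + ?s / noise g" using h1 h2 by linarith
    have "1 + ?s / (noise g + interf g a m) \<le> 1 + ?s / noise g" using h1 by linarith
    then show ?thesis using log_le_cancel_iff[of 2, OF _ p1 p2] by simp
  qed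
  moreover have "0 \<le> log 2 (1 + ?s / noise g)"
  proof -
    have "?s / noise g \<ge> 0" using s noise_pos by simp
    then show ?thesis using zero_le_log_cancel_iff[of 2 "1 + ?s / noise g"] by simp
  qed
  ultimately show ?thesis unfolding rate_form[OF assms] by (simp split: if_split)
qed


lemma interf_upd_other:
  assumes "m < nP g" "m \<noteq> n" "a m \<noteq> k"
  shows "interf g (a(n:=k)) m \<le> interf g a m"
  unfolding interf_def
proof (rule sum_mono2)
  show "finite {m'. m' < nP g \<and> m' \<noteq> m \<and> a m' = a m}" by simp
  show "{m'. m' < nP g \<and> m' \<noteq> m \<and> (a(n := k)) m' = (a(n := k)) m}
        \<subseteq> {m'. m' < nP g \<and> m' \<noteq> m \<and> a m' = a m}"
    using assms by (auto split: if_splits)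
  fix x assume "x \<in> {m'. m' < nP g \<and> m' \<noteq> m \<and> a m' = a m} -
      {m'. m' < nP g \<and> m' \<noteq> m \<and> (a(n := k)) m' = (a(n := k)) m}"
  then have "pw g x > 0" using pw_pos by auto
  then show "0 \<le> gain g x (dst g m) * pw g x" using gain_nn by simp
qed

lemma interf_upd_join:
  assumes "m < nP g" "n < nP g" "m \<noteq> n" "a m = k" "a n \<noteq> k"
  shows "interf g (a(n:=k)) m = interf g a m + gain g n (dst g m) * pw g n"
proof -
  have e: "{m'. m' < nP g \<and> m' \<noteq> m \<and> (a(n := k)) m' = (a(n := k)) m}
      = insert n {m'. m' < nP g \<and> m' \<noteq> m \<and> a m' = a m}"
    using assms by auto
  have nn: "n \<notin> {m'. m' < nP g \<and> m' \<noteq> m \<and> a m' = a m}" using assms by auto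
  show ?thesis unfolding interf_def e
    by (subst sum.insert) (use nn in auto)
qed

lemma rate_upd_other:
  assumes "m < nP g" "m \<noteq> n" "a m \<noteq> k"
  shows "rate g a m \<le> rate g (a(n:=k)) m"
proof -
  let ?s = "gain g m (dst g m) * pw g m"
  have s: "?s \<ge> 0" using gain_nn pw_pos[OF assms(1)] by (simp add: less_imp_le)
  have I: "interf g (a(n:=k)) m \<le> interf g a m" using interf_upd_other[of m n a k] assms by simp
  have i': "interf g (a(n:=k)) m \<ge> 0" by (rule interf_nn)
  have am: "(a(n:=k)) m = a m" using assms by simp
  show ?thesis
  proof (cases "(a(n:=k)) (dst g m) = a m")
    case True
    then have "dst g m \<noteq> n" using assms by auto
    then have "a (dst g m) = a m" using True by simp
    then have "rate g a m = 0" unfolding rate_form[OF assms(1)] by simp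
    moreover have "rate g (a(n:=k)) m = 0"
      using True am by (subst rate_form[OF assms(1)]) simp
    ultimately show ?thesis by simp
  next
    case False
    have r': "rate g (a(n:=k)) m = log 2 (1 + ?s / (noise g + interf g (a(n:=k)) m))"
      unfolding rate_form[OF assms(1)] using False am by simp
    have d1: "?s / (noise g + interf g a m) \<le> ?s / (noise g + interf g (a(n:=k)) m)"
      using s I i' noise_pos by (intro divide_left_mono) auto
    have d0: "?s / (noise g + interf g a m) \<ge> 0" using s I i' noise_pos by auto
    have p1: "0 < 1 + ?s / (noise g + interf g a m)" using d0 by linarith
    have p2: "0 < 1 + ?s / (noise g + interf g (a(n:=k)) m)" using d1 d0 by linarith
    have "log 2 (1 + ?s / (noise g + interf g a m)) \<le> log 2 (1 + ?s / (noise g + interf g (a(n:=k)) m))"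
      using log_le_cancel_iff[of 2, OF _ p1 p2] d1 by simp
    moreover have "0 \<le> rate g (a(n:=k)) m" by (rule rate_nn[OF assms(1)])
    moreover have "rate g a m = 0 \<or> rate g a m = log 2 (1 + ?s / (noise g + interf g a m))"
      unfolding rate_form[OF assms(1)] by simp
    ultimately show ?thesis using r' by linarith
  qed
qed

lemma rate_upd_cap:
  assumes "m < nP g"
  shows "rate g a m - rate g (a(n:=k)) m \<le> log 2 (1 + gain g m (dst g m) * pw g m / noise g)"
  using rate_le[OF assms, of a] rate_nn[OF assms, of "a(n:=k)"] by simp

lemma rate_upd_join:
  assumes "m < nP g" "n < nP g" "m \<noteq> n" "a m = k" "a n \<noteq> k" "dst g m \<noteq> n"
  shows "rate g a m - rate g (a(n:=k)) m \<le> gain g n (dst g m) * pw g n / (noise g * ln 2)"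
proof -
  let ?s = "gain g m (dst g m) * pw g m"
  let ?D = "gain g n (dst g m) * pw g n"
  have s: "?s \<ge> 0" using gain_nn pw_pos[OF assms(1)] by (simp add: less_imp_le)
  have D: "?D \<ge> 0" using gain_nn pw_pos[OF assms(2)] by (simp add: less_imp_le)
  have J: "interf g (a(n:=k)) m = interf g a m + ?D" using interf_upd_join[of m n a k] assms by simp
  have i: "interf g a m \<ge> 0" by (rule interf_nn)
  have am: "(a(n:=k)) m = a m" using assms by simp
  have ad: "(a(n:=k)) (dst g m) = a (dst g m)" using assms by simp
  show ?thesis
  proof (cases "a (dst g m) = a m")
    case True
    then show ?thesis unfolding rate_form[OF assms(1)] using am ad D noise_pos by simp
  next
    case False
    have A: "noise g + interf g a m > 0" using i noise_pos by simp
    have "rate g a m - rate g (a(n:=k)) m =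
       log 2 (1 + ?s / (noise g + interf g a m)) - log 2 (1 + ?s / ((noise g + interf g a m) + ?D))"
      unfolding rate_form[OF assms(1)] J using False am ad by (simp add: add.assoc)
    also have "\<dots> \<le> ?D / ((noise g + interf g a m) * ln 2)"
      by (rule log_diff_bound[OF A s D])
    also have "\<dots> \<le> ?D / (noise g * ln 2)"
      using D i noise_pos by (intro divide_left_mono mult_right_mono) auto
    finally show ?thesis .
  qed
qed

lemma game_main:
  fixes a :: "nat \<Rightarrow> nat" and n :: nat and eps T W Pm smax R :: real and S :: nat
  assumes gain_self: "\<And>j. gain g j j = 0"
  and fib: "\<And>j. j < nP g \<Longrightarrow> card {m. m < nP g \<and> dst g m = j} \<le> S"
  and pwle: "\<And>m. m < nP g \<Longrightarrow> pw g m \<le> Pm"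
  and snr: "\<And>m. m < nP g \<Longrightarrow> gain g m (dst g m) * pw g m / noise g \<le> smax"
  and nearT: "\<And>j. j < nP g \<Longrightarrow> real (card {i. i < nP g \<and> i \<noteq> j \<and> dist (pos g i) (pos g j) < R}) \<le> T"
  and far: "\<And>m j. m < nP g \<Longrightarrow> j < nP g \<Longrightarrow> \<not> dist (pos g m) (pos g j) < R \<Longrightarrow> gain g m j \<le> W"
  and W: "W \<ge> 0" and eps: "eps > 0"
  and num1: "1 + T + real (nP g) * W * Pm / (eps * noise g * ln 2 / 2) \<le> real (nK g) / 2"
  and num2: "real S * log 2 (1 + smax) + real S * log 2 (1 + smax) * T + real (nP g) * W * Pm / (noise g * ln 2)
              \<le> (real (nK g) / 2) * (eps / 4)"
  and prof: "profile g a" and n: "n < nP g" and nb: "a n \<notin> best_set g eps a n"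
  shows "eps / 4 \<le> measure_pmf.expectation (pmf_of_set (best_set g (eps / 2) a n))
                    (\<lambda>k. sumrate g (a(n := k)) - sumrate g a)"
proof -
  define N where "N = nP g"
  define K where "K = nK g"
  define near where "near = (\<lambda>j. {i. i < N \<and> i \<noteq> j \<and> dist (pos g i) (pos g j) < R})"
  define c where "c = log 2 (1 + smax)"
  define B where "B = best_set g (eps / 2) a n"
  define f where "f = (\<lambda>k. rate g (a(n := k)) n)"
  define MX where "MX = (MAX k' \<in> {1..K}. f k')"
  define s where "s = gain g n (dst g n) * pw g n"
  define tau where "tau = eps * noise g * ln 2 / 2"
  have nN: "n < N" using n N_def by simp
  have N0: "noise g > 0" by (rule noise_pos)
  have ln2: "ln (2::real) > 0" by simp
  have tau: "tau > 0" unfolding tau_def using eps N0 ln2 by simp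
  have Pm: "Pm > 0" using pwle[OF n] pw_pos[OF n] by simp
  have s0: "s \<ge> 0" unfolding s_def using gain_nn pw_pos[OF n] by (simp add: less_imp_le)
  have dn: "dst g n < N" "dst g n \<noteq> n" using dst_ok[OF n] N_def by auto
  have T0: "T \<ge> 0" using nearT[OF n] by (meson of_nat_0_le_iff order_trans)
  have sm: "\<And>m. m < N \<Longrightarrow> log 2 (1 + gain g m (dst g m) * pw g m / noise g) \<le> c"
  proof -
    fix m assume m: "m < N"
    have x0: "gain g m (dst g m) * pw g m / noise g \<ge> 0"
      using gain_nn pw_pos[of m] m N_def N0 by (simp add: less_imp_le)
    have "gain g m (dst g m) * pw g m / noise g \<le> smax" using snr m N_def by simp
    then show "log 2 (1 + gain g m (dst g m) * pw g m / noise g) \<le> c"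
      unfolding c_def using x0 by (subst log_le_cancel_iff) auto
  qed
  have c0: "c \<ge> 0"
    using sm[OF nN] rate_nn[OF n, of a] rate_le[OF n, of a] by linarith
  have WPm: "W * Pm \<ge> 0" using W Pm by simp
  have NWP: "real N * W * Pm \<ge> 0" using WPm by (simp add: mult.assoc)
  have K2: "real K \<ge> 2"
  proof -
    have "real N * W * Pm / tau \<ge> 0" using NWP tau by simp
    then show ?thesis using num1 T0 unfolding K_def N_def tau_def by linarith
  qed
  have fin1K: "finite {1..K}" "{1..K} \<noteq> {}" using K2 by auto
  have f_le: "\<And>k. f k \<le> log 2 (1 + s / noise g)"
    unfolding f_def s_def using rate_le[OF n] by simp
  have MX_le: "MX \<le> log 2 (1 + s / noise g)"
    unfolding MX_def using fin1K f_le by (subst Max_le_iff) auto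
  have an: "a n \<in> {1..K}" using prof nN unfolding profile_def K_def N_def by auto
  have rate_an: "rate g a n + eps < MX"
  proof -
    have "\<not> (rate g (a(n := a n)) n + eps \<ge> MX)"
      using nb an unfolding best_set_def MX_def f_def K_def by auto
    then show ?thesis by simp
  qed
  have Bsub: "B \<subseteq> {1..K}" unfolding B_def best_set_def K_def by auto
  have finB: "finite B" using Bsub finite_subset by blast
  have B_iff: "\<And>k. k \<in> B \<longleftrightarrow> k \<in> {1..K} \<and> MX \<le> f k + eps / 2"
    unfolding B_def best_set_def MX_def f_def K_def by auto
  have good: "\<And>k. k \<in> {1..K} \<Longrightarrow> a (dst g n) \<noteq> k \<Longrightarrow> interf g (a(n := k)) n \<le> tau \<Longrightarrow> k \<in> B"
  proof -
    fix k assume k: "k \<in> {1..K}" and ad: "a (dst g n) \<noteq> k" and I: "interf g (a(n := k)) n \<le> tau"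
    have I0: "interf g (a(n := k)) n \<ge> 0" by (rule interf_nn)
    have fk: "f k = log 2 (1 + s / (noise g + interf g (a(n := k)) n))"
      unfolding f_def s_def rate_form[OF n] using ad dn by simp
    have "log 2 (1 + s / noise g) - f k \<le> interf g (a(n := k)) n / (noise g * ln 2)"
      unfolding fk by (rule log_diff_bound[OF N0 s0 I0])
    also have "\<dots> \<le> tau / (noise g * ln 2)"
      using I N0 ln2 by (intro divide_right_mono) auto
    also have "\<dots> = eps / 2" unfolding tau_def using N0 ln2 by simp
    finally show "k \<in> B" using B_iff k MX_le by simp
  qed
  define cnt where "cnt = (\<lambda>k. card {m\<in>{..<N}. a m = k})"
  define H where "H = {k\<in>{1..K}. tau < W * Pm * real (cnt k)}"
  have cnt_sum: "(\<Sum>k\<in>{1..K}. real (cnt k)) \<le> real N"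
  proof -
    have "(\<Sum>k\<in>{1..K}. cnt k) = card {m\<in>{..<N}. a m \<in> {1..K}}"
      unfolding cnt_def by (rule card_fiber_sum) auto
    also have "\<dots> \<le> card {..<N}" by (intro card_mono) auto
    finally have "(\<Sum>k\<in>{1..K}. cnt k) \<le> N" by simp
    then show ?thesis by (metis of_nat_le_iff of_nat_sum)
  qed
  have cardH: "real (card H) \<le> real N * W * Pm / tau"
  proof -
    have "real (card H) * tau \<le> (\<Sum>k\<in>{1..K}. W * Pm * real (cnt k))"
      unfolding H_def using WPm tau by (intro card_gt_sum_bound) auto
    also have "\<dots> = W * Pm * (\<Sum>k\<in>{1..K}. real (cnt k))" by (simp add: sum_distrib_left)
    also have "\<dots> \<le> W * Pm * real N" using cnt_sum WPm by (intro mult_left_mono) auto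
    finally show ?thesis using tau by (simp add: field_simps)
  qed
  have bad_sub: "{1..K} - B \<subseteq> {a (dst g n)} \<union> a ` near (dst g n) \<union> H"
  proof
    fix k assume k: "k \<in> {1..K} - B"
    show "k \<in> {a (dst g n)} \<union> a ` near (dst g n) \<union> H"
    proof (rule ccontr)
      assume nk: "k \<notin> {a (dst g n)} \<union> a ` near (dst g n) \<union> H"
      have ad: "a (dst g n) \<noteq> k" using nk by auto
      have kK: "k \<in> {1..K}" using k by simp
      have "interf g (a(n := k)) n \<le> tau"
      proof -
        let ?Sk = "{m'. m' < nP g \<and> m' \<noteq> n \<and> (a(n := k)) m' = (a(n := k)) n}"
        have sub: "?Sk \<subseteq> {m\<in>{..<N}. a m = k}" unfolding N_def by auto
        have each: "\<And>m. m \<in> ?Sk \<Longrightarrow> gain g m (dst g n) * pw g m \<le> W * Pm"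
        proof -
          fix m assume m: "m \<in> ?Sk"
          then have mN: "m < N" and am: "a m = k" unfolding N_def by auto
          have "m \<notin> near (dst g n)" using nk am by auto
          then have "gain g m (dst g n) \<le> W"
          proof (cases "m = dst g n")
            case True then show ?thesis using gain_self W by simp
          next
            case False
            then have "\<not> dist (pos g m) (pos g (dst g n)) < R"
              using \<open>m \<notin> near (dst g n)\<close> mN unfolding near_def by auto
            then show ?thesis using far mN dn unfolding N_def by auto
          qed
          moreover have "pw g m \<le> Pm" "pw g m \<ge> 0" using pwle pw_pos mN N_def
            by (auto simp: less_imp_le)
          ultimately show "gain g m (dst g n) * pw g m \<le> W * Pm"
            using gain_nn W by (intro mult_mono) auto
        qed
        have "interf g (a(n := k)) n \<le> (\<Sum>m\<in>?Sk. W * Pm)"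
          unfolding interf_def by (intro sum_mono each) auto
        also have "\<dots> = W * Pm * real (card ?Sk)" by simp
        also have "\<dots> \<le> W * Pm * real (cnt k)"
        proof -
          have "card ?Sk \<le> cnt k" unfolding cnt_def
            by (rule card_mono[OF _ sub]) simp
          then show ?thesis using WPm by (intro mult_left_mono) auto
        qed
        also have "\<dots> \<le> tau" using nk kK unfolding H_def by auto
        finally show ?thesis .
      qed
      then have "k \<in> B" using good kK ad by blast
      then show False using k by simp
    qed
  qed
  have card_bad: "real (card ({1..K} - B)) \<le> 1 + T + real N * W * Pm / tau"
  proof -
    have "card ({1..K} - B) \<le> card ({a (dst g n)} \<union> a ` near (dst g n) \<union> H)"
      using bad_sub unfolding near_def H_def by (intro card_mono) auto
    also have "\<dots> \<le> card {a (dst g n)} + card (a ` near (dst g n)) + card H"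
      by (metis card_Un_le add_le_mono le_refl order_trans)
    also have "card (a ` near (dst g n)) \<le> card (near (dst g n))"
      unfolding near_def by (rule card_image_le) auto
    finally have "card ({1..K} - B) \<le> 1 + card (near (dst g n)) + card H" by simp
    then have "real (card ({1..K} - B)) \<le> 1 + real (card (near (dst g n))) + real (card H)"
      by (metis of_nat_1 of_nat_add of_nat_le_iff)
    moreover have "real (card (near (dst g n))) \<le> T"
      using nearT dn unfolding near_def N_def by auto
    ultimately show ?thesis using cardH by linarith
  qed
  have cardB: "real (card B) \<ge> real K / 2"
  proof -
    have "card {1..K} = card B + card ({1..K} - B)"
      using Bsub finB by (metis card_Diff_subset card_mono finite_atLeastAtMost le_add_diff_inverse)
    then have "real K = real (card B) + real (card ({1..K} - B))" by simp
    then show ?thesis using card_bad num1 unfolding K_def N_def tau_def by linarith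
  qed
  have Bne: "B \<noteq> {}" using cardB K2 by auto
  define L where "L = (\<lambda>m. if dst g m = n then c
      else if dist (pos g n) (pos g (dst g m)) < R then c else W * Pm / (noise g * ln 2))"
  have L0: "\<And>m. L m \<ge> 0" unfolding L_def using c0 WPm N0 ln2 by auto
  define lb where "lb = (\<lambda>k m. if m = n then eps / 2 else if a m = k then - L m else 0)"
  have perk: "\<And>k. k \<in> B \<Longrightarrow> sumrate g (a(n := k)) - sumrate g a \<ge> (\<Sum>m<N. lb k m)"
  proof -
    fix k assume kB: "k \<in> B"
    have kn: "k \<noteq> a n"
    proof
      assume "k = a n"
      then have "MX \<le> rate g a n + eps / 2" using kB B_iff unfolding f_def by simp
      then show False using rate_an eps by simp
    qed
    have "sumrate g (a(n := k)) - sumrate g a = (\<Sum>m<N. rate g (a(n := k)) m - rate g a m)"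
      unfolding sumrate_def N_def by (simp add: sum_subtractf)
    moreover have "(\<Sum>m<N. lb k m) \<le> (\<Sum>m<N. rate g (a(n := k)) m - rate g a m)"
    proof (rule sum_mono)
      fix m assume "m \<in> {..<N}"
      then have m: "m < nP g" unfolding N_def by simp
      show "lb k m \<le> rate g (a(n := k)) m - rate g a m"
      proof (cases "m = n")
        case True
        have "MX \<le> f k + eps / 2" using kB B_iff by simp
        then show ?thesis using True rate_an unfolding lb_def f_def by simp
      next
        case mn: False
        show ?thesis
        proof (cases "a m = k")
          case False
          then show ?thesis using rate_upd_other[of m n a k] m mn False unfolding lb_def by simp
        next
          case amk: True
          have capm: "rate g a m - rate g (a(n := k)) m \<le> c"
            using rate_upd_cap[OF m, of a n k] sm[of m] m N_def by simp
          have "rate g a m - rate g (a(n := k)) m \<le> L m"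
          proof (cases "dst g m = n")
            case True then show ?thesis using capm unfolding L_def by simp
          next
            case dmn: False
            show ?thesis
            proof (cases "dist (pos g n) (pos g (dst g m)) < R")
              case True then show ?thesis using capm dmn unfolding L_def by simp
            next
              case False
              have "gain g n (dst g m) \<le> W" using far[OF n _ False] dst_ok[OF m] by simp
              moreover have "pw g n \<le> Pm" "pw g n \<ge> 0" using pwle[OF n] pw_pos[OF n] by auto
              ultimately have gp: "gain g n (dst g m) * pw g n \<le> W * Pm"
                using gain_nn W by (intro mult_mono) auto
              have "rate g a m - rate g (a(n := k)) m \<le> gain g n (dst g m) * pw g n / (noise g * ln 2)"
                using rate_upd_join[of m n a k] m n mn amk dmn kn by simp
              also have "\<dots> \<le> W * Pm / (noise g * ln 2)"
                using gp N0 ln2 by (intro divide_right_mono) auto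
              finally show ?thesis using dmn False unfolding L_def by simp
            qed
          qed
          then show ?thesis using mn amk unfolding lb_def by simp
        qed
      qed
    qed
    ultimately show "sumrate g (a(n := k)) - sumrate g a \<ge> (\<Sum>m<N. lb k m)" by simp
  qed
  define Ltot where "Ltot = (\<Sum>m<N. if m = n then 0 else L m)"
  have sumlb: "(\<Sum>k\<in>B. \<Sum>m<N. lb k m) \<ge> real (card B) * (eps / 2) - Ltot"
  proof -
    have "(\<Sum>k\<in>B. \<Sum>m<N. lb k m) = (\<Sum>m<N. \<Sum>k\<in>B. lb k m)" by (rule sum.swap)
    also have "\<dots> \<ge> (\<Sum>m<N. (if m = n then real (card B) * (eps / 2) else 0) - (if m = n then 0 else L m))"
    proof (rule sum_mono)
      fix m assume "m \<in> {..<N}"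
      show "(if m = n then real (card B) * (eps / 2) else 0) - (if m = n then 0 else L m) \<le> (\<Sum>k\<in>B. lb k m)"
      proof (cases "m = n")
        case True then show ?thesis unfolding lb_def by simp
      next
        case False
        have "(\<Sum>k\<in>B. lb k m) = (\<Sum>k\<in>B. if a m = k then - L m else 0)"
          unfolding lb_def using False by simp
        also have "\<dots> = (if a m \<in> B then - L m else 0)"
          using finB by (simp add: sum.delta)
        finally show ?thesis using False L0[of m] by simp
      qed
    qed
    also have "(\<Sum>m<N. (if m = n then real (card B) * (eps / 2) else 0) - (if m = n then 0 else L m))
        = real (card B) * (eps / 2) - Ltot"
      unfolding Ltot_def using nN by (simp add: sum_subtractf)
    finally show ?thesis .
  qed
  have Ltot_le: "Ltot \<le> real S * c + real S * c * T + real N * W * Pm / (noise g * ln 2)"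
  proof -
    define ind1 where "ind1 = (\<lambda>m. if dst g m = n then 1 else (0::real))"
    define ind2 where "ind2 = (\<lambda>m. if dst g m \<in> near n then 1 else (0::real))"
    have pt: "\<And>m. m < N \<Longrightarrow> (if m = n then 0 else L m) \<le> c * ind1 m + c * ind2 m + W * Pm / (noise g * ln 2)"
    proof -
      fix m assume m: "m < N"
      have e0: "W * Pm / (noise g * ln 2) \<ge> 0" using WPm N0 ln2 by simp
      have i0: "ind1 m \<ge> 0" "ind2 m \<ge> 0" unfolding ind1_def ind2_def by auto
      show "(if m = n then 0 else L m) \<le> c * ind1 m + c * ind2 m + W * Pm / (noise g * ln 2)"
      proof (cases "m = n")
        case True then show ?thesis using e0 i0 c0 by simp
      next
        case False
        show ?thesis
        proof (cases "dst g m = n")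
          case True then show ?thesis using False e0 i0 c0 unfolding L_def ind1_def by simp
        next
          case dmn: False
          show ?thesis
          proof (cases "dist (pos g n) (pos g (dst g m)) < R")
            case True
            have "dst g m \<in> near n" unfolding near_def using True dmn dst_ok[of m] m N_def
              by (simp add: dist_commute)
            then show ?thesis using False dmn True e0 i0 c0 unfolding L_def ind2_def ind1_def by simp
          next
            case F2: False
            then show ?thesis using False dmn e0 i0 c0 unfolding L_def ind2_def ind1_def by simp
          qed
        qed
      qed
    qed
    have s1: "(\<Sum>m<N. ind1 m) \<le> real S"
    proof -
      have "(\<Sum>m<N. ind1 m) = real (card ({..<N} \<inter> {m. dst g m = n}))"
        unfolding ind1_def by (simp add: sum.If_cases)
      also have "{..<N} \<inter> {m. dst g m = n} = {m\<in>{..<N}. dst g m = n}" by auto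
      also have "{m\<in>{..<N}. dst g m = n} = {m. m < nP g \<and> dst g m = n}" unfolding N_def by auto
      finally show ?thesis using fib[OF n] by simp
    qed
    have s2: "(\<Sum>m<N. ind2 m) \<le> real S * T"
    proof -
      have "(\<Sum>m<N. ind2 m) = real (card ({..<N} \<inter> {m. dst g m \<in> near n}))"
        unfolding ind2_def by (simp add: sum.If_cases)
      also have "{..<N} \<inter> {m. dst g m \<in> near n} = {m\<in>{..<N}. dst g m \<in> near n}" by auto
      also have "card {m\<in>{..<N}. dst g m \<in> near n} = (\<Sum>j\<in>near n. card {m\<in>{..<N}. dst g m = j})"
        unfolding near_def by (rule card_fiber_sum[symmetric]) auto
      also have "real (\<Sum>j\<in>near n. card {m\<in>{..<N}. dst g m = j}) \<le> (\<Sum>j\<in>near n. real S)"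
        unfolding of_nat_sum
      proof (rule sum_mono)
        fix j assume "j \<in> near n"
        then have "j < nP g" unfolding near_def N_def by simp
        moreover have "{m\<in>{..<N}. dst g m = j} = {m. m < nP g \<and> dst g m = j}" unfolding N_def by auto
        ultimately show "real (card {m\<in>{..<N}. dst g m = j}) \<le> real S" using fib by simp
      qed
      also have "\<dots> = real S * real (card (near n))" by simp
      also have "\<dots> \<le> real S * T" using nearT[OF n] unfolding near_def N_def
        by (intro mult_left_mono) auto
      finally show ?thesis .
    qed
    have "Ltot \<le> (\<Sum>m<N. c * ind1 m + c * ind2 m + W * Pm / (noise g * ln 2))"
      unfolding Ltot_def by (intro sum_mono pt) auto
    also have "\<dots> = c * (\<Sum>m<N. ind1 m) + c * (\<Sum>m<N. ind2 m) + real N * (W * Pm / (noise g * ln 2))"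
      by (simp add: sum.distrib sum_distrib_left)
    also have "\<dots> \<le> c * real S + c * (real S * T) + real N * (W * Pm / (noise g * ln 2))"
      using s1 s2 c0 by (intro add_mono mult_left_mono) auto
    finally show ?thesis by (simp add: algebra_simps)
  qed
  have Ltot0: "Ltot \<ge> 0" unfolding Ltot_def using L0 by (intro sum_nonneg) auto
  have cB0: "real (card B) > 0" using cardB K2 by linarith
  define Sg where "Sg = (\<Sum>k\<in>B. sumrate g (a(n := k)) - sumrate g a)"
  have E: "measure_pmf.expectation (pmf_of_set B) (\<lambda>k. sumrate g (a(n := k)) - sumrate g a)
      = Sg / real (card B)"
    unfolding Sg_def using finB Bne by (simp add: integral_pmf_of_set)
  have Sg: "Sg \<ge> real (card B) * (eps / 2) - Ltot"
    unfolding Sg_def using sumlb perk by (meson order_trans sum_mono)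
  have LK: "Ltot \<le> (real K / 2) * (eps / 4)"
    using Ltot_le num2 unfolding c_def N_def K_def by linarith
  have "Ltot \<le> real (card B) * (eps / 4)"
  proof -
    have "(real K / 2) * (eps / 4) \<le> real (card B) * (eps / 4)"
      using cardB eps by (intro mult_right_mono) auto
    then show ?thesis using LK by linarith
  qed
  then have L4: "Ltot / real (card B) \<le> eps / 4" using cB0 by (simp add: divide_le_eq mult.commute)
  have "Sg / real (card B) \<ge> (real (card B) * (eps / 2) - Ltot) / real (card B)"
    using Sg cB0 by (intro divide_right_mono) auto
  also have "(real (card B) * (eps / 2) - Ltot) / real (card B) = eps / 2 - Ltot / real (card B)"
    using cB0 by (simp add: diff_divide_distrib)
  finally have "Sg / real (card B) \<ge> eps / 4" using L4 by linarith
  then have "measure_pmf.expectation (pmf_of_set B) (\<lambda>k. sumrate g (a(n := k)) - sumrate g a) \<ge> eps / 4"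
    using E by simp
  then show ?thesis unfolding B_def by simp
qed

end



lemma best_set_ne:
  assumes "profile g a" "n < nP g" "eps \<ge> 0"
  shows "best_set g eps a n \<noteq> {}" "finite (best_set g eps a n)"
proof -
  have K: "{1..nK g} \<noteq> {}" using assms unfolding profile_def by auto
  obtain k where k: "k \<in> {1..nK g}" "rate g (a(n := k)) n = (MAX k' \<in> {1..nK g}. rate g (a(n := k')) n)"
    using Max_in[of "(\<lambda>k'. rate g (a(n := k')) n) ` {1..nK g}"] K by fastforce
  have "rate g (a(n := k)) n + eps \<ge> (MAX k' \<in> {1..nK g}. rate g (a(n := k')) n)"
    using k(2) assms(3) by linarith
  then have "k \<in> best_set g eps a n" unfolding best_set_def using k(1) by blast
  then show "best_set g eps a n \<noteq> {}" by auto
  show "finite (best_set g eps a n)" unfolding best_set_def by simp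
qed

lemma br_step_nonneg:
  assumes H: "\<forall>a n. profile g a \<and> n < nP g \<and> a n \<notin> best_set g eps a n \<longrightarrow>
          measure_pmf.expectation (pmf_of_set (best_set g (eps / 2) a n))
            (\<lambda>k. sumrate g (a(n := k)) - sumrate g a) \<ge> eps / 4"
    and eps: "eps > 0" and vs: "valid_schedule g sched" and prof: "profile g a"
  shows "measure_pmf.expectation (br_step g eps sched t a) (\<lambda>a'. sumrate g a' - sumrate g a) \<ge> 0"
proof (cases "sched t a = {}")
  case True
  then show ?thesis unfolding br_step_def by simp
next
  case False
  let ?A = "sched t a"
  let ?h = "\<lambda>a'. sumrate g a' - sumrate g a"
  let ?f = "\<lambda>n. if a n \<in> best_set g eps a n then return_pmf a
        else pmf_of_set (best_set g (eps / 2) a n) \<bind> (\<lambda>k. return_pmf (a(n := k)))"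
  have Asub: "?A \<subseteq> {..<nP g}" using vs unfolding valid_schedule_def by auto
  have finA: "finite ?A" using Asub finite_subset by blast
  have inner: "\<And>n. n \<in> ?A \<Longrightarrow> measure_pmf.expectation (?f n) ?h \<ge> 0 \<and> finite (set_pmf (?f n))"
  proof -
    fix n assume "n \<in> ?A"
    then have n: "n < nP g" using Asub by auto
    show "measure_pmf.expectation (?f n) ?h \<ge> 0 \<and> finite (set_pmf (?f n))"
    proof (cases "a n \<in> best_set g eps a n")
      case True then show ?thesis by simp
    next
      case False
      let ?B = "best_set g (eps / 2) a n"
      have Bne: "?B \<noteq> {}" and finB: "finite ?B" using best_set_ne[OF prof n, of "eps/2"] eps by auto
      have "measure_pmf.expectation (pmf_of_set ?B \<bind> (\<lambda>k. return_pmf (a(n := k)))) ?h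
          = (\<Sum>k\<in>?B. measure_pmf.expectation (return_pmf (a(n := k))) ?h /\<^sub>R real (card ?B))"
        using Bne finB by (intro pmf_expectation_bind_pmf_of_set) auto
      also have "\<dots> = (\<Sum>k\<in>?B. ?h (a(n := k)) / real (card ?B))"
        by (intro sum.cong refl) (simp add: field_simps)
      also have "\<dots> = measure_pmf.expectation (pmf_of_set ?B) (\<lambda>k. ?h (a(n := k)))"
        using Bne finB by (simp add: integral_pmf_of_set sum_divide_distrib)
      also have "\<dots> \<ge> eps / 4"
      proof -
        have "profile g a \<and> n < nP g \<and> a n \<notin> best_set g eps a n" using prof n False by simp
        then show ?thesis by (rule H[rule_format])
      qed
      finally have "measure_pmf.expectation (pmf_of_set ?B \<bind> (\<lambda>k. return_pmf (a(n := k)))) ?h \<ge> 0"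
        using eps by linarith
      moreover have "finite (set_pmf (pmf_of_set ?B \<bind> (\<lambda>k. return_pmf (a(n := k)))))"
        using Bne finB by (simp add: set_bind_pmf)
      ultimately show ?thesis using False by simp
    qed
  qed
  have bs: "br_step g eps sched t a = pmf_of_set ?A \<bind> ?f"
    unfolding br_step_def using False by simp
  have "measure_pmf.expectation (br_step g eps sched t a) ?h
      = (\<Sum>n\<in>?A. measure_pmf.expectation (?f n) ?h /\<^sub>R real (card ?A))"
    unfolding bs by (rule pmf_expectation_bind_pmf_of_set[OF False finA]) (use inner in blast)
  also have "\<dots> \<ge> 0" using inner by (intro sum_nonneg) auto
  finally show ?thesis .
qed



lemma key_powr:
  fixes x alpha :: real
  assumes x: "x > 0" and a: "alpha > 0"
  shows "sqrt (x powr (alpha / (alpha + 2))) powr (- alpha) * x powr (alpha / 2) = x powr (alpha / (alpha + 2))"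
proof -
  have "sqrt (x powr (alpha / (alpha + 2))) = x powr (alpha / (alpha + 2) / 2)"
    using x by (simp add: powr_half_sqrt[symmetric] powr_powr)
  then have "sqrt (x powr (alpha / (alpha + 2))) powr (- alpha) = x powr (- (alpha * (alpha / (alpha + 2) / 2)))"
    using x by (simp add: powr_powr mult.commute)
  then have "sqrt (x powr (alpha / (alpha + 2))) powr (- alpha) * x powr (alpha / 2)
      = x powr (- (alpha * (alpha / (alpha + 2) / 2))) * x powr (alpha / 2)" by simp
  also have "\<dots> = x powr (- (alpha * (alpha / (alpha + 2) / 2)) + alpha / 2)"
    by (rule powr_add[symmetric])
  also have "- (alpha * (alpha / (alpha + 2) / 2)) + alpha / 2 = alpha / (alpha + 2)"
    using a by (simp add: field_simps)
  finally show ?thesis .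
qed

lemma x_le_q:
  fixes x b :: real
  assumes "0 < x" "x \<le> 1" "0 \<le> b" "b \<le> 1"
  shows "x \<le> x powr b"
proof -
  have "x powr 1 \<le> x powr b" using assms by (intro powr_mono') auto
  then show ?thesis using assms by simp
qed

lemma lnN_bounds:
  fixes N :: nat
  assumes "N \<ge> 3"
  shows "1 / real N \<le> ln (real N) / real N" "ln (real N) / real N \<le> 1" "0 < ln (real N) / real N"
proof -
  have N3: "real N \<ge> 3" using assms by simp
  have "ln (3::real) \<ge> 1"
  proof -
    have "exp (1::real) \<le> 3" using exp_le by simp
    then have "ln (exp 1) \<le> ln (3::real)" by (subst ln_le_cancel_iff) auto
    then show ?thesis by simp
  qed
  moreover have "ln (3::real) \<le> ln (real N)" using N3 by (subst ln_le_cancel_iff) auto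
  ultimately have l1: "ln (real N) \<ge> 1" by simp
  then show "1 / real N \<le> ln (real N) / real N" using N3 by (intro divide_right_mono) auto
  have "ln (real N) \<le> real N - 1" using N3 by (intro ln_le_minus_one) auto
  then show "ln (real N) / real N \<le> 1" using N3 by simp
  show "0 < ln (real N) / real N" using l1 N3 by simp
qed

lemma num_conds:
  fixes K u T Y tau d S c A Gp eps :: real
  assumes K: "K > 0" and u: "u \<ge> 0" and Ku: "1 \<le> K * u" and T0: "0 \<le> T" and TA: "T \<le> K * u * A"
    and A: "A \<ge> 0" and Y: "Y = K * u * Gp" and Gp: "Gp \<ge> 0" and tau: "tau > 0" and d: "d > 0" and S: "S \<ge> 0"
    and h1: "u * (1 + A + Gp / tau) \<le> 1 / 2"
    and h2: "u * (S * \<bar>c\<bar> + S * \<bar>c\<bar> * A + Gp / d) \<le> eps / 8"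
  shows "1 + T + Y / tau \<le> K / 2" "S * c + S * c * T + Y / d \<le> (K / 2) * (eps / 4)"
proof -
  have "1 + T + Y / tau \<le> K * u + K * u * A + K * u * Gp / tau" using Ku TA Y by simp
  also have "\<dots> = K * (u * (1 + A + Gp / tau))" by (simp add: algebra_simps)
  also have "\<dots> \<le> K * (1 / 2)" using h1 K by (intro mult_left_mono) auto
  finally show "1 + T + Y / tau \<le> K / 2" by simp
  have a1: "S * c \<le> S * \<bar>c\<bar> * (K * u)"
  proof -
    have "S * c \<le> S * \<bar>c\<bar>" using S by (intro mult_left_mono) auto
    also have "\<dots> = S * \<bar>c\<bar> * 1" by simp
    also have "\<dots> \<le> S * \<bar>c\<bar> * (K * u)" using S Ku by (intro mult_left_mono) auto
    finally show ?thesis .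
  qed
  have a2: "S * c * T \<le> S * \<bar>c\<bar> * (K * u * A)"
  proof -
    have "S * c * T \<le> S * \<bar>c\<bar> * T" using S T0 by (intro mult_right_mono mult_left_mono) auto
    also have "\<dots> \<le> S * \<bar>c\<bar> * (K * u * A)" using S TA by (intro mult_left_mono) auto
    finally show ?thesis .
  qed
  have "S * c + S * c * T + Y / d \<le> S * \<bar>c\<bar> * (K * u) + S * \<bar>c\<bar> * (K * u * A) + K * u * Gp / d"
    using a1 a2 Y by simp
  also have "\<dots> = K * (u * (S * \<bar>c\<bar> + S * \<bar>c\<bar> * A + Gp / d))" by (simp add: algebra_simps)
  also have "\<dots> \<le> K * (eps / 8)" using h2 K by (intro mult_left_mono) auto
  finally show "S * c + S * c * T + Y / d \<le> (K / 2) * (eps / 4)" by simp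
qed



lemma pim_fubini:
  fixes \<mu> :: "'a measure" and I :: "nat set"
  assumes ps: "prob_space \<mu>" and sp: "space \<mu> = UNIV" and I: "finite I" "j \<notin> I"
    and h[measurable]: "h \<in> borel_measurable \<mu>"
    and f[measurable]: "\<And>i. i \<in> I \<Longrightarrow> case_prod (f i) \<in> borel_measurable (\<mu> \<Otimes>\<^sub>M \<mu>)"
  shows "(\<integral>\<^sup>+x. h (x j) * (\<Prod>i\<in>I. f i (x i) (x j)) \<partial>PiM (insert j I) (\<lambda>_. \<mu>))
       = (\<integral>\<^sup>+y. h y * (\<Prod>i\<in>I. \<integral>\<^sup>+z. f i z y \<partial>\<mu>) \<partial>\<mu>)"
proof -
  interpret ps: prob_space \<mu> by (rule ps)
  interpret P: product_sigma_finite "\<lambda>_. \<mu>"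
    by (intro product_sigma_finite.intro) (simp add: ps.sigma_finite_measure_axioms)
  have fm: "\<And>i y. i \<in> I \<Longrightarrow> (\<lambda>z. f i z y) \<in> borel_measurable \<mu>"
  proof -
    fix i y assume i: "i \<in> I"
    have "(\<lambda>z. case_prod (f i) (z, y)) \<in> borel_measurable \<mu>"
      by (rule measurable_compose[OF _ f[OF i]]) (auto intro!: measurable_Pair simp: sp)
    then show "(\<lambda>z. f i z y) \<in> borel_measurable \<mu>" by simp
  qed
  have meas: "(\<lambda>x. h (x j) * (\<Prod>i\<in>I. f i (x i) (x j))) \<in> borel_measurable (PiM (insert j I) (\<lambda>_. \<mu>))"
  proof -
    have "\<And>i. i \<in> I \<Longrightarrow> (\<lambda>x. case_prod (f i) (x i, x j)) \<in> borel_measurable (PiM (insert j I) (\<lambda>_. \<mu>))"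
      by (rule measurable_compose[OF _ f]) auto
    then have pm: "\<And>i. i \<in> I \<Longrightarrow> (\<lambda>x. f i (x i) (x j)) \<in> borel_measurable (PiM (insert j I) (\<lambda>_. \<mu>))"
      by simp
    have hm: "(\<lambda>x. h (x j)) \<in> borel_measurable (PiM (insert j I) (\<lambda>_. \<mu>))"
      by (rule measurable_compose[OF _ h]) auto
    show ?thesis by (intro borel_measurable_times_ennreal hm borel_measurable_prod_ennreal pm)
  qed
  have "(\<integral>\<^sup>+x. h (x j) * (\<Prod>i\<in>I. f i (x i) (x j)) \<partial>PiM (insert j I) (\<lambda>_. \<mu>))
     = (\<integral>\<^sup>+y. (\<integral>\<^sup>+x. h ((x(j := y)) j) * (\<Prod>i\<in>I. f i ((x(j := y)) i) ((x(j := y)) j)) \<partial>PiM I (\<lambda>_. \<mu>)) \<partial>\<mu>)"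
    by (rule P.product_nn_integral_insert_rev[OF I meas])
  also have "\<dots> = (\<integral>\<^sup>+y. (\<integral>\<^sup>+x. h y * (\<Prod>i\<in>I. f i (x i) y) \<partial>PiM I (\<lambda>_. \<mu>)) \<partial>\<mu>)"
  proof (intro nn_integral_cong)
    fix y x
    have "(\<Prod>i\<in>I. f i ((x(j := y)) i) ((x(j := y)) j)) = (\<Prod>i\<in>I. f i (x i) y)"
      using I(2) by (intro prod.cong) auto
    then show "h ((x(j := y)) j) * (\<Prod>i\<in>I. f i ((x(j := y)) i) ((x(j := y)) j)) = h y * (\<Prod>i\<in>I. f i (x i) y)"
      by simp
  qed
  also have "\<dots> = (\<integral>\<^sup>+y. h y * (\<integral>\<^sup>+x. (\<Prod>i\<in>I. f i (x i) y) \<partial>PiM I (\<lambda>_. \<mu>)) \<partial>\<mu>)"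
  proof (intro nn_integral_cong)
    fix y
    have "(\<lambda>x. \<Prod>i\<in>I. f i (x i) y) \<in> borel_measurable (PiM I (\<lambda>_. \<mu>))"
    proof (intro borel_measurable_prod_ennreal)
      fix i assume i: "i \<in> I"
      show "(\<lambda>x. f i (x i) y) \<in> borel_measurable (PiM I (\<lambda>_. \<mu>))"
        by (rule measurable_compose[OF _ fm[OF i]]) (use i in auto)
    qed
    then show "(\<integral>\<^sup>+x. h y * (\<Prod>i\<in>I. f i (x i) y) \<partial>PiM I (\<lambda>_. \<mu>)) = h y * (\<integral>\<^sup>+x. (\<Prod>i\<in>I. f i (x i) y) \<partial>PiM I (\<lambda>_. \<mu>))"
      by (rule nn_integral_cmult)
  qed
  also have "\<dots> = (\<integral>\<^sup>+y. h y * (\<Prod>i\<in>I. \<integral>\<^sup>+z. f i z y \<partial>\<mu>) \<partial>\<mu>)"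
    by (intro nn_integral_cong arg_cong2[where f="(*)"] refl P.product_nn_integral_prod I fm)
  finally show ?thesis .
qed

lemma lborel_ball_le:
  fixes y :: "real \<times> real" and R :: real
  assumes "R \<ge> 0"
  shows "emeasure lborel {z. dist z y < R} \<le> ennreal (4 * R^2)"
proof -
  have sub: "{z. dist z y < R} \<subseteq> cbox (y - (R, R)) (y + (R, R))"
  proof
    fix z :: "real \<times> real" assume "z \<in> {z. dist z y < R}"
    then have d: "dist z y < R" by simp
    have "\<bar>fst z - fst y\<bar> \<le> dist z y" "\<bar>snd z - snd y\<bar> \<le> dist z y"
      using dist_fst_le[of z y] dist_snd_le[of z y] by (auto simp: dist_real_def)
    then show "z \<in> cbox (y - (R, R)) (y + (R, R))"
      using d by (cases z, cases y) (auto simp: cbox_Pair_eq)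
  qed
  have "emeasure lborel {z. dist z y < R} \<le> emeasure lborel (cbox (y - (R, R)) (y + (R, R)))"
    by (intro emeasure_mono sub) auto
  also have "\<dots> = ennreal (4 * R^2)"
    using assms by (cases y) (simp add: emeasure_lborel_cbox_eq Basis_prod_def inner_prod_def power2_eq_square prod_ennreal)
  finally show ?thesis .
qed

locale unif =
  fixes D :: "(real \<times> real) set" and lam :: real
  assumes lam: "lam > 0" and Dm: "D \<in> sets lborel" and area: "emeasure lborel D = ennreal (1 / lam)"
begin

definition "mu = uniform_measure lborel D"

lemma mu_prob: "prob_space mu"
  unfolding mu_def using lam area by (intro prob_space_uniform_measure) auto

lemma mu_space: "space mu = UNIV" unfolding mu_def by simp

lemma mu_sets: "sets mu = sets borel" unfolding mu_def by simp

lemma mu_emeasure: "B \<in> sets borel \<Longrightarrow> emeasure mu B = emeasure lborel (D \<inter> B) * ennreal lam"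
  unfolding mu_def using lam Dm area
  by (simp add: divide_ennreal_def inverse_ennreal)

lemma mu_compl: "emeasure mu (- D) = 0"
  using Dm by (subst mu_emeasure) auto

lemma mu_point: "emeasure mu {y} = 0"
proof -
  have "emeasure mu {y} = emeasure lborel (D \<inter> {y}) * ennreal lam" by (rule mu_emeasure) simp
  also have "emeasure lborel (D \<inter> {y}) = 0"
    using emeasure_mono[of "D \<inter> {y}" "{y}" lborel] by simp
  finally show ?thesis by simp
qed

lemma mu_ball: assumes "R \<ge> 0" shows "emeasure mu {z. dist z y < R} \<le> ennreal (4 * lam * R^2)"
proof -
  have bm: "{z. dist z y < R} \<in> sets borel" by measurable
  have "emeasure mu {z. dist z y < R} = emeasure lborel (D \<inter> {z. dist z y < R}) * ennreal lam"
    by (rule mu_emeasure[OF bm])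
  also have "\<dots> \<le> emeasure lborel {z. dist z y < R} * ennreal lam"
    using bm by (intro mult_right_mono emeasure_mono) auto
  also have "\<dots> \<le> ennreal (4 * R^2) * ennreal lam"
    by (intro mult_right_mono lborel_ball_le assms) auto
  also have "\<dots> = ennreal (4 * lam * R^2)" using lam by (simp add: ennreal_mult'[symmetric] mult_ac)
  finally show ?thesis .
qed


lemma pair_meas:
  assumes "case_prod F \<in> borel_measurable (borel \<Otimes>\<^sub>M borel)"
  shows "case_prod F \<in> borel_measurable (mu \<Otimes>\<^sub>M mu)"
  using assms measurable_cong_sets[OF sets_pair_measure_cong[OF mu_sets mu_sets] refl] by blast

lemma dist_ind_meas:
  "case_prod (\<lambda>z y. if dist z y < r then (a::ennreal) else b) \<in> borel_measurable (mu \<Otimes>\<^sub>M mu)"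
  by (rule pair_meas) measurable

definition "PM N = PiM {..<N} (\<lambda>_. mu)"

lemma PM_prob: "prob_space (PM N)"
  unfolding PM_def using mu_prob by (intro prob_space_PiM) auto

lemma ins_eq: "j < N \<Longrightarrow> insert j ({..<N} - {j}) = {..<N}" by auto

lemma PM_ins: "j < N \<Longrightarrow> PM N = PiM (insert j ({..<N} - {j})) (\<lambda>_. mu)"
  unfolding PM_def using ins_eq[of j N] by simp

lemma comp_meas: "i < N \<Longrightarrow> (\<lambda>x. x i) \<in> borel_measurable (PM N)"
  using measurable_cong_sets[OF refl mu_sets, of "PM N"] measurable_component_singleton[of i "{..<N}" "\<lambda>_. mu"]
  unfolding PM_def by auto

lemma pair_ball:
  fixes N i j :: nat and r :: real
  assumes ij: "i < N" "j < N" "i \<noteq> j" and r: "r \<ge> 0"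
  shows "emeasure (PM N) {x\<in>space (PM N). dist (x i) (x j) < r} \<le> ennreal (4 * lam * r^2)"
proof -
  interpret mp: prob_space mu by (rule mu_prob)
  let ?I = "{..<N} - {j}"
  define f where "f = (\<lambda>(k::nat) (z::real\<times>real) y. if k = i then (if dist z y < r then (1::ennreal) else 0) else 1)"
  have fm: "case_prod (f k) \<in> borel_measurable (mu \<Otimes>\<^sub>M mu)" for k
  proof (cases "k = i")
    case True
    then have "f k = (\<lambda>z y. if dist z y < r then 1 else 0)" unfolding f_def by simp
    then show ?thesis by (simp add: dist_ind_meas)
  next
    case False
    then have "f k = (\<lambda>z y. 1)" unfolding f_def by simp
    then show ?thesis by simp
  qed
  have iI: "i \<in> ?I" using ij by simp
  have setm: "{x\<in>space (PM N). dist (x i) (x j) < r} \<in> sets (PM N)"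
  proof -
    have "(\<lambda>x. dist (x i) (x j)) \<in> borel_measurable (PM N)"
      using comp_meas[of i N] comp_meas[of j N] ij by (intro borel_measurable_dist) auto
    then show ?thesis by measurable
  qed
  have "emeasure (PM N) {x\<in>space (PM N). dist (x i) (x j) < r}
      = (\<integral>\<^sup>+x. indicator {x\<in>space (PM N). dist (x i) (x j) < r} x \<partial>PM N)"
    using setm by simp
  also have "\<dots> = (\<integral>\<^sup>+x. (\<lambda>_. 1) (x j) * (\<Prod>k\<in>?I. f k (x k) (x j)) \<partial>PM N)"
  proof (intro nn_integral_cong)
    fix x assume "x \<in> space (PM N)"
    have "(\<Prod>k\<in>?I. f k (x k) (x j)) = (if dist (x i) (x j) < r then 1 else 0)"
      unfolding f_def using iI by (simp add: prod.delta)
    then show "indicator {x\<in>space (PM N). dist (x i) (x j) < r} x = (\<lambda>_. 1) (x j) * (\<Prod>k\<in>?I. f k (x k) (x j))"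
      using \<open>x \<in> space (PM N)\<close> by (simp add: indicator_def)
  qed
  also have "\<dots> = (\<integral>\<^sup>+y. (\<lambda>_. 1) y * (\<Prod>k\<in>?I. \<integral>\<^sup>+z. f k z y \<partial>mu) \<partial>mu)"
    unfolding PM_ins[OF ij(2)]
    by (rule pim_fubini[OF mu_prob mu_space]) (auto simp: fm)
  also have "\<dots> = (\<integral>\<^sup>+y. emeasure mu {z. dist z y < r} \<partial>mu)"
  proof (intro nn_integral_cong)
    fix y
    have e1: "(\<integral>\<^sup>+z. f k z y \<partial>mu) = (if k = i then \<integral>\<^sup>+z. f i z y \<partial>mu else 1)" for k
    proof (cases "k = i")
      case False
      then have "(\<integral>\<^sup>+z. f k z y \<partial>mu) = (\<integral>\<^sup>+z. 1 \<partial>mu)" unfolding f_def by simp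
      also have "\<dots> = 1" using mp.emeasure_space_1 by simp
      finally show ?thesis using False by simp
    qed simp
    have "(\<Prod>k\<in>?I. \<integral>\<^sup>+z. f k z y \<partial>mu) = (\<Prod>k\<in>?I. if k = i then \<integral>\<^sup>+z. f i z y \<partial>mu else 1)"
      using e1 by simp
    also have "\<dots> = (\<integral>\<^sup>+z. f i z y \<partial>mu)" using iI by (simp add: prod.delta)
    also have "\<dots> = emeasure mu {z. dist z y < r}"
    proof -
      have "(\<integral>\<^sup>+z. f i z y \<partial>mu) = (\<integral>\<^sup>+z. indicator {z. dist z y < r} z \<partial>mu)"
        unfolding f_def by (intro nn_integral_cong) (simp add: indicator_def)
      also have "\<dots> = emeasure mu {z. dist z y < r}"
        by (intro nn_integral_indicator) (simp add: mu_sets)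
      finally show ?thesis .
    qed
    finally show "(\<lambda>_. 1) y * (\<Prod>k\<in>?I. \<integral>\<^sup>+z. f k z y \<partial>mu) = emeasure mu {z. dist z y < r}" by simp
  qed
  also have "\<dots> \<le> (\<integral>\<^sup>+y. ennreal (4 * lam * r^2) \<partial>mu)"
    by (intro nn_integral_mono mu_ball r)
  also have "\<dots> = ennreal (4 * lam * r^2)"
    using mp.emeasure_space_1 by simp
  finally show ?thesis .
qed


lemma pair_eq:
  fixes N i j :: nat
  assumes ij: "i < N" "j < N" "i \<noteq> j"
  shows "emeasure (PM N) {x\<in>space (PM N). x i = x j} = 0"
proof -
  have "emeasure (PM N) {x\<in>space (PM N). x i = x j} \<le> 0"
  proof (rule ennreal_le_epsilon)
    fix e :: real assume e: "0 < e"
    define r where "r = sqrt (e / (4 * lam))"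
    have r0: "r \<ge> 0" unfolding r_def using lam e by simp
    have r2: "4 * lam * r^2 = e" unfolding r_def using lam e by simp
    have sm: "{x\<in>space (PM N). dist (x i) (x j) < r} \<in> sets (PM N)"
    proof -
      have "(\<lambda>x. dist (x i) (x j)) \<in> borel_measurable (PM N)"
        using comp_meas[of i N] comp_meas[of j N] ij by (intro borel_measurable_dist) auto
      then show ?thesis by measurable
    qed
    have "emeasure (PM N) {x\<in>space (PM N). x i = x j} \<le> emeasure (PM N) {x\<in>space (PM N). dist (x i) (x j) < r}"
    proof (cases "r > 0")
      case True
      then show ?thesis by (intro emeasure_mono sm) auto
    next
      case False
      then have "r = 0" using r0 by simp
      then have "e = 0" using r2 by simp
      then show ?thesis using e by simp
    qed
    also have "\<dots> \<le> ennreal (4 * lam * r^2)" by (rule pair_ball[OF ij r0])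
    finally show "emeasure (PM N) {x\<in>space (PM N). x i = x j} \<le> 0 + ennreal e" using r2 by simp
  qed
  then show ?thesis by simp
qed

lemma comp_D:
  fixes N m :: nat
  assumes m: "m < N"
  shows "emeasure (PM N) {x\<in>space (PM N). x m \<notin> D} = 0"
proof -
  interpret mp: prob_space mu by (rule mu_prob)
  let ?I = "{..<N} - {m}"
  have Dc: "- D \<in> sets borel" using Dm by simp
  have setm: "{x\<in>space (PM N). x m \<notin> D} \<in> sets (PM N)"
  proof -
    have "(\<lambda>x. x m) \<in> borel_measurable (PM N)" by (rule comp_meas[OF m])
    then have "(\<lambda>x. x m) -` (- D) \<inter> space (PM N) \<in> sets (PM N)" using Dc by (rule measurable_sets)
    moreover have "(\<lambda>x. x m) -` (- D) \<inter> space (PM N) = {x\<in>space (PM N). x m \<notin> D}" by auto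
    ultimately show ?thesis by simp
  qed
  have "emeasure (PM N) {x\<in>space (PM N). x m \<notin> D}
      = (\<integral>\<^sup>+x. indicator {x\<in>space (PM N). x m \<notin> D} x \<partial>PM N)"
    using setm by simp
  also have "\<dots> = (\<integral>\<^sup>+x. indicator (- D) (x m) * (\<Prod>k\<in>?I. (\<lambda>z y. 1) (x k) (x m)) \<partial>PM N)"
    by (intro nn_integral_cong) (simp add: indicator_def)
  also have "\<dots> = (\<integral>\<^sup>+y. indicator (- D) y * (\<Prod>k\<in>?I. \<integral>\<^sup>+z. (\<lambda>z y. 1) z y \<partial>mu) \<partial>mu)"
    unfolding PM_ins[OF m]
    by (rule pim_fubini[OF mu_prob mu_space]) (auto simp: measurable_cong_sets[OF mu_sets refl] Dc intro!: borel_measurable_indicator)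
  also have "\<dots> = (\<integral>\<^sup>+y. indicator (- D) y \<partial>mu)"
    using mp.emeasure_space_1 by simp
  also have "\<dots> = emeasure mu (- D)" using Dc by (simp add: mu_sets)
  also have "\<dots> = 0" by (rule mu_compl)
  finally show ?thesis .
qed

lemma chernoff:
  fixes N j :: nat and r t :: real
  assumes j: "j < N" and r: "r \<ge> 0"
  shows "emeasure (PM N) {x\<in>space (PM N). t < (\<Sum>i\<in>{..<N} - {j}. if dist (x i) (x j) < r then 1 else 0)}
         \<le> ennreal (exp (8 * lam * r^2 * real N - t))"
proof -
  interpret mp: prob_space mu by (rule mu_prob)
  let ?I = "{..<N} - {j}"
  define f where "f = (\<lambda>(k::nat) (z::real\<times>real) y. if dist z y < r then ennreal (exp 1) else 1)"
  define C where "C = (\<lambda>x::nat\<Rightarrow>real\<times>real. (\<Sum>i\<in>?I. if dist (x i) (x j) < r then 1 else (0::real)))"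
  define u where "u = (\<lambda>x::nat\<Rightarrow>real\<times>real. (\<Prod>k\<in>?I. f k (x k) (x j)))"
  have fm: "case_prod (f k) \<in> borel_measurable (mu \<Otimes>\<^sub>M mu)" for k
    unfolding f_def by (simp add: dist_ind_meas)
  have um: "u \<in> borel_measurable (PM N)"
  proof -
    have "\<And>k. k \<in> ?I \<Longrightarrow> (\<lambda>x. f k (x k) (x j)) \<in> borel_measurable (PM N)"
    proof -
      fix k assume "k \<in> ?I"
      then have "(\<lambda>x. dist (x k) (x j)) \<in> borel_measurable (PM N)"
        using comp_meas[of k N] comp_meas[of j N] j by (intro borel_measurable_dist) auto
      then show "(\<lambda>x. f k (x k) (x j)) \<in> borel_measurable (PM N)" unfolding f_def by measurable
    qed
    then show ?thesis unfolding u_def by (intro borel_measurable_prod_ennreal)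
  qed
  have uC: "u x = ennreal (exp (C x))" for x
  proof -
    have "u x = (\<Prod>k\<in>?I. ennreal (if dist (x k) (x j) < r then exp 1 else 1))"
      unfolding u_def f_def by (intro prod.cong) auto
    also have "\<dots> = ennreal (\<Prod>k\<in>?I. if dist (x k) (x j) < r then exp 1 else 1)"
      by (rule prod_ennreal) auto
    also have "(\<Prod>k\<in>?I. if dist (x k) (x j) < r then exp 1 else 1) = (\<Prod>k\<in>?I. exp (if dist (x k) (x j) < r then 1 else 0))"
      by (intro prod.cong) auto
    also have "\<dots> = exp (C x)" unfolding C_def by (simp add: exp_sum)
    finally show ?thesis .
  qed
  have sub: "{x\<in>space (PM N). t < C x} \<subseteq> {x\<in>space (PM N). 1 \<le> ennreal (exp (- t)) * u x}"
  proof safe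
    fix x assume "x \<in> space (PM N)" "t < C x"
    then have "1 \<le> exp (- t) * exp (C x)" by (simp add: exp_add[symmetric])
    then show "1 \<le> ennreal (exp (- t)) * u x" unfolding uC by (simp add: ennreal_mult[symmetric])
  qed
  have "emeasure (PM N) {x\<in>space (PM N). t < C x} \<le> emeasure (PM N) {x\<in>space (PM N). 1 \<le> ennreal (exp (- t)) * u x}"
    using sub um by (intro emeasure_mono) measurable
  also have "\<dots> \<le> ennreal (exp (- t)) * (\<integral>\<^sup>+x. u x * indicator (space (PM N)) x \<partial>PM N)"
    using um by (intro nn_integral_Markov_inequality) auto
  also have "(\<integral>\<^sup>+x. u x * indicator (space (PM N)) x \<partial>PM N) = (\<integral>\<^sup>+x. (\<lambda>_. 1) (x j) * u x \<partial>PM N)"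
    by (intro nn_integral_cong) simp
  also have "\<dots> = (\<integral>\<^sup>+y. (\<lambda>_. 1) y * (\<Prod>k\<in>?I. \<integral>\<^sup>+z. f k z y \<partial>mu) \<partial>mu)"
    unfolding PM_ins[OF j] u_def
    by (rule pim_fubini[OF mu_prob mu_space]) (auto simp: fm)
  also have "\<dots> \<le> (\<integral>\<^sup>+y. ennreal (exp (8 * lam * r^2 * real N)) \<partial>mu)"
  proof (intro nn_integral_mono)
    fix y
    have one: "(\<integral>\<^sup>+z. f k z y \<partial>mu) \<le> ennreal (exp (8 * lam * r^2))" for k
    proof -
      have "(\<integral>\<^sup>+z. f k z y \<partial>mu) = (\<integral>\<^sup>+z. 1 + ennreal (exp 1 - 1) * indicator {z. dist z y < r} z \<partial>mu)"
      proof (intro nn_integral_cong)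
        fix z
        have "exp (1::real) \<ge> 1" by simp
        then have "ennreal (1 + (exp 1 - 1)) = ennreal 1 + ennreal (exp 1 - 1)"
          by (intro ennreal_plus) auto
        then have "ennreal (exp 1) = 1 + ennreal (exp 1 - 1)" by simp
        then show "f k z y = 1 + ennreal (exp 1 - 1) * indicator {z. dist z y < r} z"
          unfolding f_def by (simp add: indicator_def)
      qed
      also have "\<dots> = (\<integral>\<^sup>+z. 1 \<partial>mu) + ennreal (exp 1 - 1) * emeasure mu {z. dist z y < r}"
      proof -
        have bm: "{z. dist z y < r} \<in> sets mu" unfolding mu_sets by measurable
        show ?thesis
          using bm by (subst nn_integral_add) (auto simp: nn_integral_cmult_indicator)
      qed
      also have "\<dots> \<le> 1 + ennreal (exp 1 - 1) * ennreal (4 * lam * r^2)"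
        using mp.emeasure_space_1 mu_ball[OF r, of y] by (auto intro!: add_mono mult_left_mono)
      also have "\<dots> = ennreal (1 + (exp 1 - 1) * (4 * lam * r^2))"
      proof -
        have p: "(exp 1 - 1) * (4 * lam * r^2) \<ge> 0" using lam by simp
        have "ennreal (exp 1 - 1) * ennreal (4 * lam * r^2) = ennreal ((exp 1 - 1) * (4 * lam * r^2))"
          using lam by (simp add: ennreal_mult[symmetric])
        moreover have "ennreal (1 + (exp 1 - 1) * (4 * lam * r^2)) = ennreal 1 + ennreal ((exp 1 - 1) * (4 * lam * r^2))"
          using p by (intro ennreal_plus) auto
        ultimately show ?thesis by simp
      qed
      also have "\<dots> \<le> ennreal (exp (8 * lam * r^2))"
      proof (intro ennreal_leI)
        have e2: "exp (1::real) - 1 \<le> 2" using exp_le by simp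
        have x0: "4 * lam * r^2 \<ge> 0" using lam by simp
        have "1 + (exp 1 - 1) * (4 * lam * r^2) \<le> 1 + 2 * (4 * lam * r^2)"
          using e2 x0 by (intro add_left_mono mult_right_mono) auto
        also have "\<dots> \<le> exp (2 * (4 * lam * r^2))" by (rule exp_ge_add_one_self)
        finally show "1 + (exp 1 - 1) * (4 * lam * r^2) \<le> exp (8 * lam * r^2)" by (simp add: mult.assoc)
      qed
      finally show ?thesis .
    qed
    have "(\<Prod>k\<in>?I. \<integral>\<^sup>+z. f k z y \<partial>mu) \<le> (\<Prod>k\<in>?I. ennreal (exp (8 * lam * r^2)))"
      by (intro prod_mono_ennreal one)
    also have "\<dots> = ennreal (exp (8 * lam * r^2)) ^ card ?I" by simp
    also have "\<dots> = ennreal (exp (8 * lam * r^2 * real (card ?I)))"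
      by (simp add: ennreal_power exp_of_nat_mult[symmetric] mult.commute)
    also have "\<dots> \<le> ennreal (exp (8 * lam * r^2 * real N))"
    proof (intro ennreal_leI)
      have "card ?I \<le> N" using card_Diff_subset[of "{j}" "{..<N}"] j by simp
      then have "8 * lam * r^2 * real (card ?I) \<le> 8 * lam * r^2 * real N"
        using lam by (intro mult_left_mono) auto
      then show "exp (8 * lam * r^2 * real (card ?I)) \<le> exp (8 * lam * r^2 * real N)" by simp
    qed
    finally show "(\<lambda>_. 1) y * (\<Prod>k\<in>?I. \<integral>\<^sup>+z. f k z y \<partial>mu) \<le> ennreal (exp (8 * lam * r^2 * real N))"
      by simp
  qed
  also have "\<dots> = ennreal (exp (8 * lam * r^2 * real N))" using mp.emeasure_space_1 by simp
  finally have "emeasure (PM N) {x\<in>space (PM N). t < C x} \<le> ennreal (exp (- t)) * ennreal (exp (8 * lam * r^2 * real N))"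
    by (simp add: mult_left_mono)
  also have "\<dots> = ennreal (exp (8 * lam * r^2 * real N - t))"
    by (simp add: ennreal_mult[symmetric] exp_add[symmetric])
  finally show ?thesis unfolding C_def .
qed


lemma dist_meas: "i < N \<Longrightarrow> j < N \<Longrightarrow> (\<lambda>x. dist (x i) (x j)) \<in> borel_measurable (PM N)"
  using comp_meas[of i N] comp_meas[of j N] by (intro borel_measurable_dist) auto

lemma setD_meas: "m < N \<Longrightarrow> {x\<in>space (PM N). x m \<notin> D} \<in> sets (PM N)"
proof -
  assume m: "m < N"
  have Dc: "- D \<in> sets borel" using Dm by simp
  have "(\<lambda>x. x m) -` (- D) \<inter> space (PM N) \<in> sets (PM N)" using comp_meas[OF m] Dc by (rule measurable_sets)
  moreover have "(\<lambda>x. x m) -` (- D) \<inter> space (PM N) = {x\<in>space (PM N). x m \<notin> D}" by auto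
  ultimately show ?thesis by simp
qed

lemma seteq_meas: "i < N \<Longrightarrow> j < N \<Longrightarrow> {x\<in>space (PM N). x i = x j} \<in> sets (PM N)"
proof -
  assume ij: "i < N" "j < N"
  have dm: "(\<lambda>x. dist (x i) (x j)) \<in> borel_measurable (PM N)" using dist_meas[OF ij] .
  have "(\<lambda>x. dist (x i) (x j)) -` {0} \<inter> space (PM N) \<in> sets (PM N)" using dm by (rule measurable_sets) simp
  moreover have "(\<lambda>x. dist (x i) (x j)) -` {0} \<inter> space (PM N) = {x\<in>space (PM N). x i = x j}" by auto
  ultimately show ?thesis by simp
qed

lemma cnt_meas: "j < N \<Longrightarrow> (\<lambda>x. \<Sum>i\<in>{..<N} - {j}. if dist (x i) (x j) < r then 1 else (0::real)) \<in> borel_measurable (PM N)"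
proof -
  assume j: "j < N"
  have "\<And>i. i \<in> {..<N} - {j} \<Longrightarrow> (\<lambda>x. if dist (x i) (x j) < r then 1 else (0::real)) \<in> borel_measurable (PM N)"
  proof -
    fix i assume "i \<in> {..<N} - {j}"
    then have "(\<lambda>x. dist (x i) (x j)) \<in> borel_measurable (PM N)" using dist_meas j by auto
    then show "(\<lambda>x. if dist (x i) (x j) < r then 1 else (0::real)) \<in> borel_measurable (PM N)" by measurable
  qed
  then show ?thesis by (intro borel_measurable_sum)
qed

lemma setC_meas: "j < N \<Longrightarrow> {x\<in>space (PM N). t < (\<Sum>i\<in>{..<N} - {j}. if dist (x i) (x j) < r then 1 else (0::real))} \<in> sets (PM N)"
  using cnt_meas[of j N r] by measurable

end

lemma count_eq_sum:
  fixes A :: "nat set" and P :: "nat \<Rightarrow> bool"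
  assumes "finite A"
  shows "(\<Sum>i\<in>A. if P i then 1 else (0::real)) = real (card {i\<in>A. P i})"
proof -
  have "(\<Sum>i\<in>A. if P i then 1 else (0::real)) = real (card (A \<inter> {i. P i}))"
    using assms by (simp add: sum.If_cases)
  also have "A \<inter> {i. P i} = {i\<in>A. P i}" by auto
  finally show ?thesis .
qed

theorem mainTheorem6:
  fixes lam alpha G tT tR P0 N0 smax eps :: real
    and S :: nat
    and D :: "(real \<times> real) set"
    and d :: "nat \<Rightarrow> nat \<Rightarrow> nat"
    and l :: "nat \<Rightarrow> nat"
    and pT pR :: "nat \<Rightarrow> nat \<Rightarrow> real"
    and P :: "nat \<Rightarrow> (nat \<Rightarrow> real \<times> real) \<Rightarrow> nat \<Rightarrow> real"
  defines "M \<equiv> (\<lambda>N. PiM {..<N} (\<lambda>_. uniform_measure lborel D))"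
    and "net_of \<equiv> (\<lambda>N x. mk_net G alpha tT tR N0 N (N div l N) (d N) (pT N) (pR N) x (P N x))"
  assumes lam: "lam > 0" and alpha: "alpha > 0" and G: "G > 0"
    and tT: "0 < tT" "tT \<le> 2 * pi" and tR: "0 < tR" "tR \<le> 2 * pi"
    and P0: "P0 > 0" and N0: "N0 > 0" and S: "S \<ge> 1"
    and D_closed: "closed D" and D_area: "emeasure lborel D = ennreal (1 / lam)"
    and d_ok: "\<And>N n. N \<ge> 2 \<Longrightarrow> n < N \<Longrightarrow> d N n < N \<and> d N n \<noteq> n"
    and d_in: "\<And>N p. N \<ge> 2 \<Longrightarrow> p < N \<Longrightarrow> card {n. n < N \<and> d N n = p} \<le> S"
    and l_ok: "\<And>N. N \<ge> 2 \<Longrightarrow> l N \<ge> 1 \<and> l N dvd N"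
    and l_lim: "(\<lambda>N. real (l N) * (ln (real N) / real N) powr (alpha / (alpha + 2))) \<longlonglongrightarrow> 0"
    and P_ok: "\<And>N x n. N \<ge> 2 \<Longrightarrow> (\<forall>m<N. x m \<in> D) \<Longrightarrow> n < N \<Longrightarrow>
               0 < P N x n \<and> P N x n \<le> P0 * (ln (real N) / real N) powr (alpha / 2)"
    and SNR: "\<And>N x n. N \<ge> 2 \<Longrightarrow> (\<forall>m<N. x m \<in> D) \<Longrightarrow> inj_on x {..<N} \<Longrightarrow> n < N \<Longrightarrow>
               gain (net_of N x) n (d N n) * P N x n / N0 \<le> smax"
    and eps: "eps > 0"
  shows
    "(\<exists>E. (\<forall>N. E N \<in> sets (M N) \<and>
           E N \<subseteq> {x. inj_on x {..<N} \<and>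
             (\<forall>a n. profile (net_of N x) a \<and> n < N \<and> a n \<notin> best_set (net_of N x) eps a n \<longrightarrow>
                measure_pmf.expectation (pmf_of_set (best_set (net_of N x) (eps / 2) a n))
                  (\<lambda>k. sumrate (net_of N x) (a(n := k)) - sumrate (net_of N x) a) \<ge> eps / 4)})
        \<and> (\<lambda>N. measure (M N) (E N)) \<longlonglongrightarrow> 1)
     \<and> (\<exists>E. (\<forall>N. E N \<in> sets (M N) \<and>
           E N \<subseteq> {x. inj_on x {..<N} \<and>
             (\<forall>sched. valid_schedule (net_of N x) sched \<and> nondegenerate (net_of N x) eps sched \<longrightarrow>
                (\<forall>t a. profile (net_of N x) a \<longrightarrow>
                   measure_pmf.expectation (br_step (net_of N x) eps sched t a)
                     (\<lambda>a'. sumrate (net_of N x) a' - sumrate (net_of N x) a) \<ge> 0))})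
        \<and> (\<lambda>N. measure (M N) (E N)) \<longlonglongrightarrow> 1)"
proof -
  define beta where "beta = alpha / (alpha + 2)"
  define xN where "xN = (\<lambda>N::nat. ln (real N) / real N)"
  define q where "q = (\<lambda>N::nat. xN N powr beta)"
  define R where "R = (\<lambda>N. sqrt (q N))"
  define tN where "tN = (\<lambda>N. 8 * lam * real N * q N + 2 * ln (real N))"
  define Cnt where "Cnt = (\<lambda>N (j::nat) (x::nat \<Rightarrow> real \<times> real).
      \<Sum>i\<in>{..<N} - {j}. if dist (x i) (x j) < R N then 1 else (0::real))"
  define u where "u = (\<lambda>N. real (l N) * q N)"
  define c where "c = log 2 (1 + smax)"
  define A where "A = 8 * lam + 2"
  define Gp where "Gp = G * P0"
  define tau where "tau = eps * N0 * ln 2 / 2"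
  define dd where "dd = N0 * ln 2"
  define C1 where "C1 = 1 + A + Gp / tau"
  define C2 where "C2 = real S * \<bar>c\<bar> + real S * \<bar>c\<bar> * A + Gp / dd"
  define good where "good = (\<lambda>N. N \<ge> 3 \<and> u N * C1 \<le> 1 / 2 \<and> u N * C2 \<le> eps / 8)"
  define P1 where "P1 = (\<lambda>N x. \<forall>a n. profile (net_of N x) a \<and> n < N \<and> a n \<notin> best_set (net_of N x) eps a n \<longrightarrow>
                measure_pmf.expectation (pmf_of_set (best_set (net_of N x) (eps / 2) a n))
                  (\<lambda>k. sumrate (net_of N x) (a(n := k)) - sumrate (net_of N x) a) \<ge> eps / 4)"
  define P2 where "P2 = (\<lambda>N x. \<forall>sched. valid_schedule (net_of N x) sched \<and> nondegenerate (net_of N x) eps sched \<longrightarrow>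
                (\<forall>t a. profile (net_of N x) a \<longrightarrow>
                   measure_pmf.expectation (br_step (net_of N x) eps sched t a)
                     (\<lambda>a'. sumrate (net_of N x) a' - sumrate (net_of N x) a) \<ge> 0))"
  interpret U: unif D lam
    using lam D_closed D_area by unfold_locales (auto intro: borel_closed)
  have M_eq: "M N = U.PM N" for N unfolding M_def U.PM_def U.mu_def by simp
  define Am where "Am = (\<lambda>N m. {x\<in>space (M N). x m \<notin> D})"
  define Bp where "Bp = (\<lambda>N (p::nat \<times> nat). if fst p \<noteq> snd p then {x\<in>space (M N). x (fst p) = x (snd p)} else {})"
  define Cj where "Cj = (\<lambda>N j. {x\<in>space (M N). tN N < Cnt N j x})"
  define bad where "bad = (\<lambda>N. (\<Union>m\<in>{..<N}. Am N m) \<union> (\<Union>p\<in>{..<N} \<times> {..<N}. Bp N p) \<union> (\<Union>j\<in>{..<N}. Cj N j))"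
  define E where "E = (\<lambda>N. if good N then space (M N) - bad N else {})"
  have Am_m: "m < N \<Longrightarrow> Am N m \<in> sets (M N)" for N m
    unfolding Am_def M_eq by (rule U.setD_meas)
  have Bp_m: "p \<in> {..<N} \<times> {..<N} \<Longrightarrow> Bp N p \<in> sets (M N)" for N p
    unfolding Bp_def M_eq using U.seteq_meas[of "fst p" N "snd p"] by (cases p) auto
  have Cj_m: "j < N \<Longrightarrow> Cj N j \<in> sets (M N)" for N j
    unfolding Cj_def M_eq Cnt_def by (rule U.setC_meas)
  have bad_m: "bad N \<in> sets (M N)" for N
    unfolding bad_def using Am_m Bp_m Cj_m by (intro sets.Un sets.finite_UN) auto
  have E_m: "E N \<in> sets (M N)" for N
    unfolding E_def using bad_m by auto
  have props: "inj_on x {..<N} \<and> P1 N x \<and> P2 N x" if xE: "x \<in> E N" for N x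
  proof -
    have gN: "good N" and xs: "x \<in> space (M N)" and xb: "x \<notin> bad N"
      using xE unfolding E_def by (auto split: if_splits)
    have N3: "N \<ge> 3" using gN unfolding good_def by simp
    have N2: "N \<ge> 2" using N3 by simp
    have inD: "\<forall>m<N. x m \<in> D" using xb xs unfolding bad_def Am_def by auto
    have inj: "inj_on x {..<N}"
    proof (rule inj_onI)
      fix i j assume ij: "i \<in> {..<N}" "j \<in> {..<N}" "x i = x j"
      show "i = j"
      proof (rule ccontr)
        assume "i \<noteq> j"
        then have "x \<in> Bp N (i, j)" unfolding Bp_def using xs ij by simp
        then have "x \<in> bad N" unfolding bad_def using ij by blast
        then show False using xb by simp
      qed
    qed
    have cntle: "\<And>j. j < N \<Longrightarrow> Cnt N j x \<le> tN N" using xb xs unfolding bad_def Cj_def by force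
    define g where "g = net_of N x"
    have gf: "nP g = N" "nK g = N div l N" "dst g = d N" "pos g = x" "pw g = P N x" "noise g = N0"
       "gG g = G" "alph g = alpha"
      unfolding g_def net_of_def mk_net_def by simp_all
    have gain_eq: "gain g m j = G * dist (x m) (x j) powr (- alpha) *
        (if in_beam (thT g) (phiT g m) (pos g m) (pos g j) \<and> in_beam (thR g) (phiR g j) (pos g j) (pos g m) then 1 else 0)" for m j
      unfolding gain_def gf by simp
    have gnn: "gain g m j \<ge> 0" for m j unfolding gain_eq using G by simp
    interpret GM: gm g
    proof
      show "noise g > 0" using gf N0 by simp
      show "\<And>m. m < nP g \<Longrightarrow> dst g m < nP g \<and> dst g m \<noteq> m" using d_ok N2 gf by simp
      show "\<And>m. m < nP g \<Longrightarrow> pw g m > 0" using P_ok[OF N2 inD] gf by simp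
      show "\<And>m j. gain g m j \<ge> 0" by (rule gnn)
    qed
    have xb1: "1 / real N \<le> xN N" "xN N \<le> 1" "0 < xN N" unfolding xN_def using lnN_bounds[OF N3] by auto
    have beta01: "0 \<le> beta" "beta \<le> 1" unfolding beta_def using alpha by auto
    have xq: "xN N \<le> q N" unfolding q_def using x_le_q[OF xb1(3) xb1(2) beta01] .
    have q0: "q N > 0" unfolding q_def using xb1 by simp
    have R0: "R N > 0" unfolding R_def using q0 by simp
    have lN: "l N \<ge> 1" "l N dvd N" using l_ok[OF N2] by auto
    define K where "K = real (nK g)"
    have K_eq: "K = real N / real (l N)" unfolding K_def gf using lN by (simp add: real_of_nat_div)
    have K0: "K > 0" unfolding K_eq using lN N3 by simp
    have Ku: "K * u N = real N * q N" unfolding K_eq u_def using lN by simp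
    define W where "W = G * R N powr (- alpha)"
    define Pm where "Pm = P0 * xN N powr (alpha / 2)"
    have W0: "W \<ge> 0" unfolding W_def using G by simp
    have WPm: "W * Pm = Gp * q N"
      unfolding W_def Pm_def Gp_def R_def q_def beta_def
      using key_powr[OF xb1(3) alpha] by (simp add: algebra_simps)
    have Ku1: "1 \<le> K * u N"
    proof -
      have "real N * (1 / real N) \<le> real N * q N" using xb1(1) xq by (intro mult_left_mono) auto
      then show ?thesis using Ku N3 by simp
    qed
    have lnle: "ln (real N) \<le> real N * q N"
    proof -
      have "ln (real N) = real N * xN N" unfolding xN_def using N3 by simp
      also have "\<dots> \<le> real N * q N" using xq by (intro mult_left_mono) auto
      finally show ?thesis .
    qed
    have lnpos: "ln (real N) \<ge> 0" using N3 by simp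
    have T0: "0 \<le> tN N" unfolding tN_def using lam q0 lnpos by simp
    have TA: "tN N \<le> K * u N * A"
      unfolding tN_def Ku A_def using lnle by (simp add: algebra_simps)
    have Y: "real N * W * Pm = K * u N * Gp" unfolding Ku using WPm by (simp add: algebra_simps)
    have Gp0: "Gp \<ge> 0" unfolding Gp_def using G P0 by simp
    have tau0: "tau > 0" unfolding tau_def using eps N0 by simp
    have dd0: "dd > 0" unfolding dd_def using N0 by simp
    have A0: "A \<ge> 0" unfolding A_def using lam by simp
    have u0: "u N \<ge> 0" unfolding u_def using q0 by simp
    have h1: "u N * (1 + A + Gp / tau) \<le> 1 / 2" using gN unfolding good_def C1_def by simp
    have h2: "u N * (real S * \<bar>c\<bar> + real S * \<bar>c\<bar> * A + Gp / dd) \<le> eps / 8" using gN unfolding good_def C2_def by simp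
    note nc = num_conds[OF K0 u0 Ku1 T0 TA A0 Y Gp0 tau0 dd0 _ h1 h2]
    have num1: "1 + tN N + real (nP g) * W * Pm / (eps * noise g * ln 2 / 2) \<le> real (nK g) / 2"
      using nc(1) unfolding gf tau_def K_def by simp
    have num2: "real S * log 2 (1 + smax) + real S * log 2 (1 + smax) * tN N + real (nP g) * W * Pm / (noise g * ln 2)
              \<le> (real (nK g) / 2) * (eps / 4)"
      using nc(2) unfolding gf dd_def K_def c_def by simp
    have gain_self: "\<And>j. gain g j j = 0" unfolding gain_eq by simp
    have fib: "\<And>j. j < nP g \<Longrightarrow> card {m. m < nP g \<and> dst g m = j} \<le> S" using d_in N2 gf by simp
    have pwle: "\<And>m. m < nP g \<Longrightarrow> pw g m \<le> Pm" using P_ok[OF N2 inD] gf unfolding Pm_def xN_def by simp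
    have snr: "\<And>m. m < nP g \<Longrightarrow> gain g m (dst g m) * pw g m / noise g \<le> smax"
      using SNR[OF N2 inD inj] gf unfolding g_def by simp
    have nearT: "\<And>j. j < nP g \<Longrightarrow> real (card {i. i < nP g \<and> i \<noteq> j \<and> dist (pos g i) (pos g j) < R N}) \<le> tN N"
    proof -
      fix j assume j: "j < nP g"
      have "Cnt N j x = real (card {i\<in>{..<N} - {j}. dist (x i) (x j) < R N})"
        unfolding Cnt_def by (rule count_eq_sum) simp
      also have "{i\<in>{..<N} - {j}. dist (x i) (x j) < R N} = {i. i < nP g \<and> i \<noteq> j \<and> dist (pos g i) (pos g j) < R N}"
        using gf by auto
      finally show "real (card {i. i < nP g \<and> i \<noteq> j \<and> dist (pos g i) (pos g j) < R N}) \<le> tN N"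
        using cntle[of j] j gf by simp
    qed
    have far: "\<And>m j. m < nP g \<Longrightarrow> j < nP g \<Longrightarrow> \<not> dist (pos g m) (pos g j) < R N \<Longrightarrow> gain g m j \<le> W"
    proof -
      fix m j assume "\<not> dist (pos g m) (pos g j) < R N"
      then have dR: "R N \<le> dist (x m) (x j)" using gf by simp
      have "dist (x m) (x j) powr (- alpha) \<le> R N powr (- alpha)"
        using dR R0 alpha by (intro powr_mono2') auto
      then have "G * dist (x m) (x j) powr (- alpha) \<le> G * R N powr (- alpha)" using G by simp
      moreover have "G * dist (x m) (x j) powr (- alpha) \<ge> 0" using G by simp
      ultimately show "gain g m j \<le> W" unfolding gain_eq W_def by auto
    qed
    have P1: "P1 N x"
      unfolding P1_def
    proof (intro allI impI)
      fix a n assume h: "profile (net_of N x) a \<and> n < N \<and> a n \<notin> best_set (net_of N x) eps a n"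
      show "eps / 4 \<le> measure_pmf.expectation (pmf_of_set (best_set (net_of N x) (eps / 2) a n))
                  (\<lambda>k. sumrate (net_of N x) (a(n := k)) - sumrate (net_of N x) a)"
        using GM.game_main[OF gain_self fib pwle snr nearT far W0 eps num1 num2] h gf
        unfolding g_def by simp
    qed
    have P2: "P2 N x"
      unfolding P2_def
    proof (intro allI impI)
      fix sched t a assume h: "valid_schedule (net_of N x) sched \<and> nondegenerate (net_of N x) eps sched"
        and pa: "profile (net_of N x) a"
      have "\<forall>a n. profile (net_of N x) a \<and> n < nP (net_of N x) \<and> a n \<notin> best_set (net_of N x) eps a n \<longrightarrow>
          measure_pmf.expectation (pmf_of_set (best_set (net_of N x) (eps / 2) a n))
            (\<lambda>k. sumrate (net_of N x) (a(n := k)) - sumrate (net_of N x) a) \<ge> eps / 4"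
        using P1 gf unfolding P1_def g_def by simp
      then show "0 \<le> measure_pmf.expectation (br_step (net_of N x) eps sched t a)
                     (\<lambda>a'. sumrate (net_of N x) a' - sumrate (net_of N x) a)"
        using br_step_nonneg[OF _ eps _ pa] h by blast
    qed
    show ?thesis using inj P1 P2 by simp
  qed
  have meas_bound: "measure (M N) (E N) \<ge> 1 - 1 / real N" if gN: "good N" for N
  proof -
    interpret PS: prob_space "M N" unfolding M_eq by (rule U.PM_prob)
    have N3: "N \<ge> 3" using gN unfolding good_def by simp
    have q0: "q N \<ge> 0" unfolding q_def by simp
    have R2: "R N ^ 2 = q N" unfolding R_def using q0 by simp
    have mA: "measure (M N) (Am N m) = 0" if "m < N" for m
      using U.comp_D[OF that] unfolding Am_def M_eq by (simp add: measure_def)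
    have mB: "measure (M N) (Bp N p) = 0" if "p \<in> {..<N} \<times> {..<N}" for p
    proof (cases "fst p \<noteq> snd p")
      case True
      then show ?thesis using U.pair_eq[of "fst p" N "snd p"] that unfolding Bp_def M_eq
        by (cases p) (auto simp: measure_def)
    next
      case False then show ?thesis unfolding Bp_def by simp
    qed
    have mC: "measure (M N) (Cj N j) \<le> 1 / real N ^ 2" if j: "j < N" for j
    proof -
      have R00: "R N \<ge> 0" unfolding R_def using q0 by simp
      have "emeasure (M N) (Cj N j) \<le> ennreal (exp (8 * lam * R N ^ 2 * real N - tN N))"
        using U.chernoff[OF j R00, of "tN N"] unfolding Cj_def M_eq Cnt_def .
      also have "exp (8 * lam * R N ^ 2 * real N - tN N) = exp (- 2 * ln (real N))"
      proof -
        have e: "8 * lam * R N ^ 2 * real N = 8 * lam * real N * q N" using R2 by (simp add: mult_ac)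
        have "8 * lam * R N ^ 2 * real N - tN N = - 2 * ln (real N)" unfolding tN_def using e by linarith
        then show ?thesis by simp
      qed
      also have "\<dots> = 1 / real N ^ 2"
      proof -
        have "exp (2 * ln (real N)) = exp (ln (real N) + ln (real N))" by (simp only: mult_2)
        also have "\<dots> = exp (ln (real N)) * exp (ln (real N))" by (rule exp_add)
        also have "\<dots> = real N ^ 2" using N3 by (simp add: power2_eq_square)
        finally have e2: "exp (2 * ln (real N)) = real N ^ 2" .
        have "exp (- 2 * ln (real N)) = exp (- (2 * ln (real N)))" by simp
        also have "\<dots> = inverse (exp (2 * ln (real N)))" by (rule exp_minus)
        also have "\<dots> = 1 / real N ^ 2" unfolding e2 by (simp add: inverse_eq_divide)
        finally show ?thesis .
      qed
      finally have "emeasure (M N) (Cj N j) \<le> ennreal (1 / real N ^ 2)" .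
      then have "ennreal (measure (M N) (Cj N j)) \<le> ennreal (1 / real N ^ 2)"
        using PS.emeasure_eq_measure[of "Cj N j"] by simp
      then show ?thesis by (subst (asm) ennreal_le_iff) auto
    qed
    define X where "X = (\<Union>m\<in>{..<N}. Am N m)"
    define Y where "Y = (\<Union>p\<in>{..<N} \<times> {..<N}. Bp N p)"
    define Z where "Z = (\<Union>j\<in>{..<N}. Cj N j)"
    have Xm: "X \<in> sets (M N)" unfolding X_def using Am_m by (intro sets.finite_UN) auto
    have Ym: "Y \<in> sets (M N)" unfolding Y_def using Bp_m by (intro sets.finite_UN) auto
    have Zm: "Z \<in> sets (M N)" unfolding Z_def using Cj_m by (intro sets.finite_UN) auto
    have "measure (M N) (bad N) = measure (M N) (X \<union> Y \<union> Z)" unfolding bad_def X_def Y_def Z_def ..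
    also have "\<dots> \<le> measure (M N) (X \<union> Y) + measure (M N) Z"
      using Xm Ym Zm by (intro measure_Un_le) auto
    also have "measure (M N) (X \<union> Y) \<le> measure (M N) X + measure (M N) Y"
      using Xm Ym by (intro measure_Un_le) auto
    finally have "measure (M N) (bad N) \<le> measure (M N) (\<Union>m\<in>{..<N}. Am N m) + measure (M N) (\<Union>p\<in>{..<N} \<times> {..<N}. Bp N p)
        + measure (M N) (\<Union>j\<in>{..<N}. Cj N j)" unfolding X_def Y_def Z_def by simp
    also have "measure (M N) (\<Union>m\<in>{..<N}. Am N m) \<le> (\<Sum>m<N. measure (M N) (Am N m))"
      using Am_m by (intro PS.finite_measure_subadditive_finite) auto
    also have "(\<Sum>m<N. measure (M N) (Am N m)) = 0" using mA by simp
    also have "measure (M N) (\<Union>p\<in>{..<N} \<times> {..<N}. Bp N p) \<le> (\<Sum>p\<in>{..<N} \<times> {..<N}. measure (M N) (Bp N p))"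
      using Bp_m by (intro PS.finite_measure_subadditive_finite) auto
    also have "(\<Sum>p\<in>{..<N} \<times> {..<N}. measure (M N) (Bp N p)) = 0" using mB by simp
    also have "measure (M N) (\<Union>j\<in>{..<N}. Cj N j) \<le> (\<Sum>j<N. measure (M N) (Cj N j))"
      using Cj_m by (intro PS.finite_measure_subadditive_finite) auto
    also have "(\<Sum>j<N. measure (M N) (Cj N j)) \<le> (\<Sum>j<N. 1 / real N ^ 2)" using mC by (intro sum_mono) auto
    also have "(\<Sum>j<N. 1 / real N ^ 2) = 1 / real N" using N3 by (simp add: power2_eq_square)
    finally have mb: "measure (M N) (bad N) \<le> 1 / real N" by simp
    have "measure (M N) (E N) = 1 - measure (M N) (bad N)"
      unfolding E_def using gN bad_m by (simp add: PS.prob_compl)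
    then show ?thesis using mb by simp
  qed
  have ev_good: "eventually good sequentially"
  proof -
    have C1p: "C1 > 0" unfolding C1_def A_def Gp_def tau_def using lam G P0 eps N0
      by (intro add_pos_nonneg) auto
    have C2n: "C2 \<ge> 0" unfolding C2_def A_def Gp_def dd_def using lam G P0 N0 by (intro add_nonneg_nonneg) auto
    have ul: "u \<longlonglongrightarrow> 0" unfolding u_def q_def xN_def beta_def using l_lim by simp
    define \<delta> where "\<delta> = min (1 / (2 * C1)) (eps / (8 * (C2 + 1)))"
    have dpos: "\<delta> > 0" unfolding \<delta>_def using C1p C2n eps by simp
    have "eventually (\<lambda>N. \<bar>u N\<bar> < \<delta>) sequentially"
      using order_tendstoD(2)[OF tendsto_rabs_zero[OF ul] dpos] by simp
    moreover have "eventually (\<lambda>N. N \<ge> (3::nat)) sequentially" by (rule eventually_ge_at_top)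
    ultimately show ?thesis
    proof (rule eventually_elim2)
      fix N assume uN: "\<bar>u N\<bar> < \<delta>" and N3: "N \<ge> 3"
      have "u N * C1 \<le> 1 / (2 * C1) * C1"
        using uN C1p unfolding \<delta>_def by (intro mult_right_mono) auto
      also have "\<dots> = 1 / 2" using C1p by simp
      finally have a: "u N * C1 \<le> 1 / 2" .
      have "u N * C2 \<le> eps / (8 * (C2 + 1)) * C2"
        using uN C2n unfolding \<delta>_def by (intro mult_right_mono) auto
      also have "\<dots> \<le> eps / (8 * (C2 + 1)) * (C2 + 1)" using eps C2n by (intro mult_left_mono) auto
      also have "\<dots> = eps / 8"
      proof -
        have "C2 + 1 > 0" using C2n by simp
        then show ?thesis by (simp add: field_simps)
      qed
      finally have b: "u N * C2 \<le> eps / 8" .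
      show "good N" unfolding good_def using a b N3 by simp
    qed
  qed
  have lim: "(\<lambda>N. measure (M N) (E N)) \<longlonglongrightarrow> 1"
  proof (rule tendsto_sandwich[of "\<lambda>N. 1 - 1 / real N" _ _ "\<lambda>_. 1"])
    show "eventually (\<lambda>N. 1 - 1 / real N \<le> measure (M N) (E N)) sequentially"
      using ev_good by eventually_elim (rule meas_bound)
    show "eventually (\<lambda>N. measure (M N) (E N) \<le> 1) sequentially"
    proof (intro always_eventually allI)
      fix N
      interpret PS: prob_space "M N" unfolding M_eq by (rule U.PM_prob)
      show "measure (M N) (E N) \<le> 1" by (rule PS.prob_le_1)
    qed
    show "(\<lambda>N. 1 - 1 / real N) \<longlonglongrightarrow> 1"
      using tendsto_diff[OF tendsto_const lim_inverse_n'] by simp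
    show "(\<lambda>_. 1::real) \<longlonglongrightarrow> 1" by simp
  qed
  have part1: "\<exists>E. (\<forall>N. E N \<in> sets (M N) \<and> E N \<subseteq> {x. inj_on x {..<N} \<and> P1 N x})
        \<and> (\<lambda>N. measure (M N) (E N)) \<longlonglongrightarrow> 1"
  proof (rule exI[of _ E], intro conjI allI)
    fix N
    show "E N \<in> sets (M N)" by (rule E_m)
    show "E N \<subseteq> {x. inj_on x {..<N} \<and> P1 N x}"
    proof
      fix x assume "x \<in> E N"
      then show "x \<in> {x. inj_on x {..<N} \<and> P1 N x}" using props[of x N] by simp
    qed
  next
    show "(\<lambda>N. measure (M N) (E N)) \<longlonglongrightarrow> 1" by (rule lim)
  qed
  have part2: "\<exists>E. (\<forall>N. E N \<in> sets (M N) \<and> E N \<subseteq> {x. inj_on x {..<N} \<and> P2 N x})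
        \<and> (\<lambda>N. measure (M N) (E N)) \<longlonglongrightarrow> 1"
  proof (rule exI[of _ E], intro conjI allI)
    fix N
    show "E N \<in> sets (M N)" by (rule E_m)
    show "E N \<subseteq> {x. inj_on x {..<N} \<and> P2 N x}"
    proof
      fix x assume "x \<in> E N"
      then show "x \<in> {x. inj_on x {..<N} \<and> P2 N x}" using props[of x N] by simp
    qed
  next
    show "(\<lambda>N. measure (M N) (E N)) \<longlonglongrightarrow> 1" by (rule lim)
  qed
  show ?thesis using part1 part2 unfolding P1_def P2_def by (intro conjI)
qed

end
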